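(* (The Fundamental Lemma.) For any graph $G$, $$\mathrm{Abl}(G)=\min_{G'\subset G} l_{\mathrm{Abl}}(G'),$$ where the minimum is taken over all subgraphs $G'$ of $G$ that are connected, have Euler characteristic $-1$, and have no leaves. If no such $G'$ exists, then the minimum is taken to be $\infty$, $\mathrm{Abl}(G)=\infty$, and there is no closed non-backtracking walk in $G$ (of positive length) that traverses each edge the same number of times in both directions.
   Context: A graph is $G=(V_G,E_G,t_G,h_G)$ with vertex set $V_G$, edge set $E_G$ and tail/head maps $t_G,h_G:E_G\to V_G$ (loops and multiple edges allowed). For finite $G$, its Euler characteristic is $\chi(G)=|V_G|-|E_G|$. Directed edges are $D_G=E_G\times\{+,-\}$, with $h(e,+)=t(e,-)=h(e)$, $t(e,+)=h(e,-)=t(e)$; $(e,+)$ and $(e,-)$ are inverses of each other. A walk of length $m\ge1$ is a sequence $(u_1,\dots,u_m)$ of directed edges with $h(u_i)=t(u_{i+1})$; it is closed if $t(u_1)=h(u_m)$, non-backtracking if $u_{i+1}\ne u_i^{-1}$ for all $i$. A path is a non-backtracking walk with distinct endpoints using each edge at most once; a cycle is a closed non-backtracking walk with $u_m\neq u_1^{-1}$ using each edge at most once. A leaf is a vertex of degree one. The abelian girth $\mathrm{Abl}(G)$ is the minimum $m\ge1$ such that there is a closed non-backtracking walk $(u_1,\dots,u_m)$ in which, for every $e\in E_G$, $(e,+)$ appears as many times as $(e,-)$ (and $\infty$ if there is none). A connected leafless graph of Euler characteristic $-1$ is exactly one of: a figure-eight graph (two mutually edge-disjoint cycles with the same endpoint),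 a barbell graph (two cycles $w_1,w_2$ and a path $b$, the bar, all mutually edge-disjoint, with $b$ joining the endpoints of $w_1$ and $w_2$), or a theta graph (two vertices joined by three mutually edge-disjoint paths). For such a graph $G'$, its abelian length $l_{\mathrm{Abl}}(G')$ is twice its number of edges, except that each edge of the bar (when $G'$ is a barbell graph) is counted four times. *)

theory Defs
  imports Main "HOL-Library.Extended_Nat"
begin

text \<open>A graph is given by a vertex set V, an edge set E and tail/head maps tG, hG
  (loops and multiple edges allowed).  Directed edges are pairs (e, b) with b = True
  standing for (e,+) and b = False for (e,-).\<close>

type_synonym 'e dedge = "'e \<times> bool"

definition dtail :: "('e \<Rightarrow> 'v) \<Rightarrow> ('e \<Rightarrow> 'v) \<Rightarrow> 'e dedge \<Rightarrow> 'v" where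
  "dtail tG hG u = (if snd u then tG (fst u) else hG (fst u))"

definition dhead :: "('e \<Rightarrow> 'v) \<Rightarrow> ('e \<Rightarrow> 'v) \<Rightarrow> 'e dedge \<Rightarrow> 'v" where
  "dhead tG hG u = (if snd u then hG (fst u) else tG (fst u))"

definition dinv :: "'e dedge \<Rightarrow> 'e dedge" where
  "dinv u = (fst u, \<not> snd u)"

definition is_walk :: "'e set \<Rightarrow> ('e \<Rightarrow> 'v) \<Rightarrow> ('e \<Rightarrow> 'v) \<Rightarrow> 'e dedge list \<Rightarrow> bool" where
  "is_walk E tG hG w \<longleftrightarrow> w \<noteq> [] \<and> (\<forall>u\<in>set w. fst u \<in> E) \<and>
     (\<forall>i. Suc i < length w \<longrightarrow> dhead tG hG (w ! i) = dtail tG hG (w ! Suc i))"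

definition is_closed :: "('e \<Rightarrow> 'v) \<Rightarrow> ('e \<Rightarrow> 'v) \<Rightarrow> 'e dedge list \<Rightarrow> bool" where
  "is_closed tG hG w \<longleftrightarrow> dtail tG hG (hd w) = dhead tG hG (last w)"

definition non_backtracking :: "'e dedge list \<Rightarrow> bool" where
  "non_backtracking w \<longleftrightarrow> (\<forall>i. Suc i < length w \<longrightarrow> w ! Suc i \<noteq> dinv (w ! i))"

definition balanced :: "'e dedge list \<Rightarrow> bool" where
  "balanced w \<longleftrightarrow> (\<forall>e. count_list w (e, True) = count_list w (e, False))"

definition abelian_walk :: "'e set \<Rightarrow> ('e \<Rightarrow> 'v) \<Rightarrow> ('e \<Rightarrow> 'v) \<Rightarrow> 'e dedge list \<Rightarrow> bool" where
  "abelian_walk E tG hG w \<longleftrightarrow>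
     is_walk E tG hG w \<and> is_closed tG hG w \<and> non_backtracking w \<and> balanced w"

text \<open>Abelian girth (infinity if there is no such walk, since Inf {} = \<infinity> in enat).\<close>
definition Abl :: "'e set \<Rightarrow> ('e \<Rightarrow> 'v) \<Rightarrow> ('e \<Rightarrow> 'v) \<Rightarrow> enat" where
  "Abl E tG hG = Inf {enat (length w) | w. abelian_walk E tG hG w}"

definition walk_edges :: "'e dedge list \<Rightarrow> 'e set" where
  "walk_edges w = fst ` set w"

definition walk_vertices :: "('e \<Rightarrow> 'v) \<Rightarrow> ('e \<Rightarrow> 'v) \<Rightarrow> 'e dedge list \<Rightarrow> 'v set" where
  "walk_vertices tG hG w = dtail tG hG ` set w \<union> dhead tG hG ` set w"

definition is_path :: "'e set \<Rightarrow> ('e \<Rightarrow> 'v) \<Rightarrow> ('e \<Rightarrow> 'v) \<Rightarrow> 'e dedge list \<Rightarrow> bool" where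
  "is_path E tG hG w \<longleftrightarrow> is_walk E tG hG w \<and> non_backtracking w \<and>
     dtail tG hG (hd w) \<noteq> dhead tG hG (last w) \<and> distinct (map fst w)"

definition is_cycle :: "'e set \<Rightarrow> ('e \<Rightarrow> 'v) \<Rightarrow> ('e \<Rightarrow> 'v) \<Rightarrow> 'e dedge list \<Rightarrow> bool" where
  "is_cycle E tG hG w \<longleftrightarrow> is_walk E tG hG w \<and> is_closed tG hG w \<and> non_backtracking w \<and>
     last w \<noteq> dinv (hd w) \<and> distinct (map fst w)"

definition is_subgraph :: "'v set \<Rightarrow> 'e set \<Rightarrow> ('e \<Rightarrow> 'v) \<Rightarrow> ('e \<Rightarrow> 'v) \<Rightarrow> 'v set \<Rightarrow> 'e set \<Rightarrow> bool" where
  "is_subgraph V E tG hG V' E' \<longleftrightarrow> V' \<subseteq> V \<and> E' \<subseteq> E \<and> (\<forall>e\<in>E'. tG e \<in> V' \<and> hG e \<in> V')"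

definition connected_graph :: "'v set \<Rightarrow> 'e set \<Rightarrow> ('e \<Rightarrow> 'v) \<Rightarrow> ('e \<Rightarrow> 'v) \<Rightarrow> bool" where
  "connected_graph V E tG hG \<longleftrightarrow> V \<noteq> {} \<and>
     (\<forall>u\<in>V. \<forall>v\<in>V. u = v \<or> (\<exists>w. is_walk E tG hG w \<and> dtail tG hG (hd w) = u \<and> dhead tG hG (last w) = v))"

definition euler_char :: "'v set \<Rightarrow> 'e set \<Rightarrow> int" where
  "euler_char V E = int (card V) - int (card E)"

text \<open>Degree (a loop contributes 2).\<close>
definition degree :: "'e set \<Rightarrow> ('e \<Rightarrow> 'v) \<Rightarrow> ('e \<Rightarrow> 'v) \<Rightarrow> 'v \<Rightarrow> nat" where
  "degree E tG hG v = card {e\<in>E. tG e = v} + card {e\<in>E. hG e = v}"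

definition leafless :: "'v set \<Rightarrow> 'e set \<Rightarrow> ('e \<Rightarrow> 'v) \<Rightarrow> ('e \<Rightarrow> 'v) \<Rightarrow> bool" where
  "leafless V E tG hG \<longleftrightarrow> (\<forall>v\<in>V. degree E tG hG v \<noteq> 1)"

definition barbell_decomp :: "'v set \<Rightarrow> 'e set \<Rightarrow> ('e \<Rightarrow> 'v) \<Rightarrow> ('e \<Rightarrow> 'v) \<Rightarrow>
    'e dedge list \<Rightarrow> 'e dedge list \<Rightarrow> 'e dedge list \<Rightarrow> bool" where
  "barbell_decomp V E tG hG w1 w2 b \<longleftrightarrow>
     is_cycle E tG hG w1 \<and> is_cycle E tG hG w2 \<and> is_path E tG hG b \<and>
     walk_edges w1 \<inter> walk_edges w2 = {} \<and> walk_edges w1 \<inter> walk_edges b = {} \<and>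
     walk_edges w2 \<inter> walk_edges b = {} \<and>
     dtail tG hG (hd b) = dtail tG hG (hd w1) \<and> dhead tG hG (last b) = dtail tG hG (hd w2) \<and>
     E = walk_edges w1 \<union> walk_edges w2 \<union> walk_edges b \<and>
     V = walk_vertices tG hG w1 \<union> walk_vertices tG hG w2 \<union> walk_vertices tG hG b"

definition is_barbell :: "'v set \<Rightarrow> 'e set \<Rightarrow> ('e \<Rightarrow> 'v) \<Rightarrow> ('e \<Rightarrow> 'v) \<Rightarrow> bool" where
  "is_barbell V E tG hG \<longleftrightarrow> (\<exists>w1 w2 b. barbell_decomp V E tG hG w1 w2 b)"

definition bar_edges :: "'v set \<Rightarrow> 'e set \<Rightarrow> ('e \<Rightarrow> 'v) \<Rightarrow> ('e \<Rightarrow> 'v) \<Rightarrow> 'e set" where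
  "bar_edges V E tG hG =
     (if is_barbell V E tG hG
      then walk_edges (SOME b. \<exists>w1 w2. barbell_decomp V E tG hG w1 w2 b) else {})"

definition l_Abl :: "'v set \<Rightarrow> 'e set \<Rightarrow> ('e \<Rightarrow> 'v) \<Rightarrow> ('e \<Rightarrow> 'v) \<Rightarrow> nat" where
  "l_Abl V E tG hG = (\<Sum>e\<in>E. if e \<in> bar_edges V E tG hG then 4 else 2)"

definition cel_subgraphs :: "'v set \<Rightarrow> 'e set \<Rightarrow> ('e \<Rightarrow> 'v) \<Rightarrow> ('e \<Rightarrow> 'v) \<Rightarrow> ('v set \<times> 'e set) set" where
  "cel_subgraphs V E tG hG = {(V', E'). is_subgraph V E tG hG V' E' \<and> finite V' \<and> finite E' \<and>
     connected_graph V' E' tG hG \<and> euler_char V' E' = -1 \<and> leafless V' E' tG hG}"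

end

theory Submission
  imports Defs
begin

lemma dinv_simps[simp]:
  "dinv (dinv d) = d" "fst (dinv d) = fst d" "dinv d \<noteq> d" "d \<noteq> dinv d"
  "dtail tG hG (dinv d) = dhead tG hG d" "dhead tG hG (dinv d) = dtail tG hG d"
  by (auto simp: dinv_def dtail_def dhead_def prod_eq_iff)

lemma dinv_eq_iff: "dinv a = b \<longleftrightarrow> a = dinv b"
  by (auto simp: dinv_def prod_eq_iff)

lemma dist_nth: "distinct (map f w) \<Longrightarrow> i < length w \<Longrightarrow> j < length w \<Longrightarrow>
    f (w ! i) = f (w ! j) \<Longrightarrow> i = j"
  by (metis length_map nth_eq_iff_index_eq nth_map)

definition rot :: "nat \<Rightarrow> 'a list \<Rightarrow> 'a list" where
  "rot k w = drop k w @ take k w"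

lemma rot_simps: "length (rot k w) = length w" "set (rot k w) = set w"
  "count_list (rot k w) d = count_list w d"
  unfolding rot_def
    apply simp
   apply (metis append_take_drop_id set_append sup_commute)
  by (metis append_take_drop_id count_list_append add.commute)

lemma rot_rotate: "k < length w \<Longrightarrow> rot k w = rotate k w"
  by (simp add: rot_def rotate_drop_take)
lemma map_rot: "map f (rot k w) = rot k (map f w)"
  by (simp add: rot_def take_map drop_map)
lemma distinct_rot: "k < length w \<Longrightarrow> distinct (rot k w) = distinct w"
  by (simp add: rot_rotate)

lemma rot_hd: "k < length w \<Longrightarrow> hd (rot k w) = w ! k"
  by (simp add: rot_def hd_drop_conv_nth)

lemma rot_last: "0 < k \<Longrightarrow> k < length w \<Longrightarrow> last (rot k w) = w ! (k - 1)"
proof -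
  assume a: "0 < k" "k < length w"
  then have "take k w \<noteq> []" "w \<noteq> []" by auto
  then have "last (rot k w) = last (take k w)" by (simp add: rot_def)
  also have "\<dots> = take k w ! (k - 1)" using a \<open>take k w \<noteq> []\<close>
    by (simp add: last_conv_nth min_def)
  also have "\<dots> = w ! (k - 1)" using a by simp
  finally show ?thesis .
qed

lemma rot_0[simp]: "rot 0 w = w" by (simp add: rot_def)

locale gr =
  fixes tG hG :: "'e \<Rightarrow> 'v"
begin

abbreviation dt where "dt \<equiv> dtail tG hG"
abbreviation dh where "dh \<equiv> dhead tG hG"

definition chain :: "'e dedge list \<Rightarrow> bool" where
  "chain w \<longleftrightarrow> successively (\<lambda>x y. dh x = dt y) w"

definition nb :: "'e dedge list \<Rightarrow> bool" where
  "nb w \<longleftrightarrow> successively (\<lambda>x y. y \<noteq> dinv x) w"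

lemma nb_eq: "non_backtracking w = nb w"
  unfolding non_backtracking_def nb_def successively_conv_nth by blast

definition walk :: "'e set \<Rightarrow> 'e dedge list \<Rightarrow> bool" where
  "walk S w \<longleftrightarrow> w \<noteq> [] \<and> fst ` set w \<subseteq> S \<and> chain w"

lemma walk_eq: "is_walk S tG hG w = walk S w"
  unfolding is_walk_def walk_def chain_def successively_conv_nth by blast

lemma chain_simps[simp]:
  "chain []" "chain [x]" "chain (x # y # xs) \<longleftrightarrow> dh x = dt y \<and> chain (y # xs)"
  by (auto simp: chain_def)

lemma nb_simps[simp]:
  "nb []" "nb [x]" "nb (x # y # xs) \<longleftrightarrow> y \<noteq> dinv x \<and> nb (y # xs)"
  by (auto simp: nb_def)

lemma chain_append: "chain (xs @ ys) \<longleftrightarrow> chain xs \<and> chain ys \<and>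
    (xs = [] \<or> ys = [] \<or> dh (last xs) = dt (hd ys))"
  by (simp add: chain_def successively_append_iff)

lemma nb_append: "nb (xs @ ys) \<longleftrightarrow> nb xs \<and> nb ys \<and>
    (xs = [] \<or> ys = [] \<or> hd ys \<noteq> dinv (last xs))"
  by (simp add: nb_def successively_append_iff)

lemma chain_Cons: "chain (x # xs) \<longleftrightarrow> chain xs \<and> (xs = [] \<or> dh x = dt (hd xs))"
  by (cases xs) auto

lemma nb_Cons: "nb (x # xs) \<longleftrightarrow> nb xs \<and> (xs = [] \<or> hd xs \<noteq> dinv x)"
  by (cases xs) auto

lemma chain_take: "chain w \<Longrightarrow> chain (take n w)"
  by (metis append_take_drop_id chain_append)
lemma chain_drop: "chain w \<Longrightarrow> chain (drop n w)"
  by (metis append_take_drop_id chain_append)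
lemma nb_take: "nb w \<Longrightarrow> nb (take n w)"
  by (metis append_take_drop_id nb_append)
lemma nb_drop: "nb w \<Longrightarrow> nb (drop n w)"
  by (metis append_take_drop_id nb_append)

lemma chain_nth: "chain w \<Longrightarrow> Suc i < length w \<Longrightarrow> dh (w ! i) = dt (w ! Suc i)"
  unfolding chain_def by (rule successively_nth)
lemma nb_nth: "nb w \<Longrightarrow> Suc i < length w \<Longrightarrow> w ! Suc i \<noteq> dinv (w ! i)"
  unfolding nb_def by (rule successively_nth)

lemma chain_iff_nth: "chain w \<longleftrightarrow> (\<forall>i. Suc i < length w \<longrightarrow> dh (w ! i) = dt (w ! Suc i))"
  unfolding chain_def successively_conv_nth by simp
lemma nb_iff_nth: "nb w \<longleftrightarrow> (\<forall>i. Suc i < length w \<longrightarrow> w ! Suc i \<noteq> dinv (w ! i))"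
  unfolding nb_def successively_conv_nth by simp

definition rw :: "'e dedge list \<Rightarrow> 'e dedge list" where
  "rw w = rev (map dinv w)"

lemma rw_simps[simp]: "rw [] = []" "rw (rw w) = w" "length (rw w) = length w"
  "rw (xs @ ys) = rw ys @ rw xs" "rw [x] = [dinv x]" "rw w = [] \<longleftrightarrow> w = []"
  "fst ` set (rw w) = fst ` set w"
  by (auto simp: rw_def rev_map[symmetric] comp_def image_image)

lemma rw_hd_last: "w \<noteq> [] \<Longrightarrow> hd (rw w) = dinv (last w)"
  "w \<noteq> [] \<Longrightarrow> last (rw w) = dinv (hd w)"
  by (auto simp: rw_def hd_rev last_rev hd_map last_map)

lemma chain_rw[simp]: "chain (rw w) \<longleftrightarrow> chain w"
  unfolding rw_def chain_def by (simp add: successively_map eq_commute)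

lemma nb_rw[simp]: "nb (rw w) \<longleftrightarrow> nb w"
  unfolding rw_def nb_def
  by (simp add: successively_map) (rule successively_cong, auto simp: dinv_eq_iff)

lemma count_rw: "count_list (rw w) d = count_list w (dinv d)"
proof (induction w)
  case (Cons a w)
  then show ?case by (auto simp: rw_def count_list_append dinv_eq_iff)
qed (simp add: rw_def)

lemma walk_rw[simp]: "walk S (rw w) \<longleftrightarrow> walk S w"
  by (simp add: walk_def)


definition closedw :: "'e dedge list \<Rightarrow> bool" where
  "closedw w \<longleftrightarrow> dh (last w) = dt (hd w)"

lemma closed_eq: "is_closed tG hG w = closedw w"
  by (auto simp: is_closed_def closedw_def)

lemma rot_chain:
  assumes "chain w" "closedw w" "k < length w"
  shows "chain (rot k w)" "closedw (rot k w)"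
proof -
  have w: "w \<noteq> []" using assms by auto
  show "chain (rot k w)"
  proof (cases "k = 0")
    case False
    then have "last (drop k w) = last w" "hd (take k w) = hd w" using assms by auto
    then show ?thesis using assms unfolding rot_def chain_append
      by (auto simp: chain_take chain_drop closedw_def)
  qed (use assms in simp)
  show "closedw (rot k w)"
  proof (cases "k = 0")
    case False
    then show ?thesis using assms rot_hd[of k w] rot_last[of k w] chain_nth[of w "k - 1"]
      by (auto simp: closedw_def)
  qed (use assms in simp)
qed

definition cnb :: "'e dedge list \<Rightarrow> bool" where
  "cnb w \<longleftrightarrow> nb w \<and> last w \<noteq> dinv (hd w)"

lemma rot_cnb:
  assumes "cnb w" "k < length w"
  shows "cnb (rot k w)"
proof (cases "k = 0")
  case False
  then have l: "last (drop k w) = last w" "hd (take k w) = hd w" using assms by auto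
  have "nb (rot k w)" using assms l unfolding rot_def nb_append cnb_def
    by (auto simp: nb_take nb_drop dinv_eq_iff)
  moreover have "last (rot k w) \<noteq> dinv (hd (rot k w))"
    using assms False rot_hd[of k w] rot_last[of k w] nb_nth[of w "k - 1"]
    by (auto simp: cnb_def dinv_eq_iff)
  ultimately show ?thesis by (simp add: cnb_def)
qed (use assms in simp)

lemma same_fst: "fst a = fst b \<Longrightarrow> a = b \<or> a = dinv b"
  by (cases a; cases b) (auto simp: dinv_def)

lemma distinct_tails_edges:
  assumes "chain w" "nb w" "distinct (map dt w)"
  shows "distinct (map fst w)"
proof -
  have "fst (w ! i) \<noteq> fst (w ! j)" if "i < j" "j < length w" for i j
  proof
    assume eq: "fst (w ! i) = fst (w ! j)"
    have ij: "i \<noteq> j" "i < length w" using that by auto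
    from same_fst[OF eq] show False
    proof
      assume "w ! i = w ! j"
      then have "dt (w ! i) = dt (w ! j)" by simp
      then show False using assms(3) ij that dist_nth[of dt w i j] by simp
    next
      assume a: "w ! i = dinv (w ! j)"
      then have "dt (w ! j) = dh (w ! i)" by simp
      also have "\<dots> = dt (w ! Suc i)" using chain_nth[OF assms(1), of i] that by simp
      finally have "j = Suc i" using assms(3) that dist_nth[of dt w j "Suc i"] by simp
      then show False using nb_nth[OF assms(2), of i] a that by auto
    qed
  qed
  then show ?thesis by (auto simp: distinct_conv_nth) (metis linorder_neqE_nat)
qed

lemma closed_heads:
  assumes "chain w" "closedw w" "w \<noteq> []"
  shows "dh ` set w = dt ` set w"
proof -
  have "dh (w ! i) \<in> dt ` set w" if "i < length w" for i
  proof (cases "Suc i < length w")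
    case True then show ?thesis using chain_nth[OF assms(1) True] by auto
  next
    case False
    then have "i = length w - 1" using that by simp
    then have "w ! i = last w" using assms(3) by (simp add: last_conv_nth)
    then show ?thesis using assms by (auto simp: closedw_def)
  qed
  moreover have "dt (w ! i) \<in> dh ` set w" if "i < length w" for i
  proof (cases i)
    case (Suc j)
    then have "dt (w ! i) = dh (w ! j)" "j < length w" using chain_nth[OF assms(1), of j] that by auto
    then show ?thesis by auto
  next
    case 0
    then have "w ! i = hd w" using assms by (simp add: hd_conv_nth)
    have "dh (last w) \<in> dh ` set w" using assms(3) by simp
    moreover have "dt (w ! i) = dh (last w)" using assms \<open>w ! i = hd w\<close> by (simp add: closedw_def)
    ultimately show ?thesis by simp
  qed
  ultimately show ?thesis
    by (auto simp: in_set_conv_nth image_iff) (metis in_set_conv_nth)+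
qed

definition adj :: "'e set \<Rightarrow> ('v \<times> 'v) set" where
  "adj S = {(tG e, hG e) |e. e \<in> S} \<union> {(hG e, tG e) |e. e \<in> S}"

definition reach :: "'e set \<Rightarrow> 'v \<Rightarrow> 'v \<Rightarrow> bool" where
  "reach S a b \<longleftrightarrow> (a, b) \<in> (adj S)\<^sup>*"

lemma reach_refl[simp]: "reach S a a" by (simp add: reach_def)

lemma reach_trans: "reach S a b \<Longrightarrow> reach S b c \<Longrightarrow> reach S a c"
  by (simp add: reach_def)

lemma adj_sym: "(a, b) \<in> adj S \<Longrightarrow> (b, a) \<in> adj S"
  by (auto simp: adj_def)

lemma reach_sym: "reach S a b \<Longrightarrow> reach S b a"
  unfolding reach_def
proof (induction rule: rtrancl_induct)
  case (step y z)
  then show ?case by (meson adj_sym converse_rtrancl_into_rtrancl)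
qed simp

lemma reach_mono: "reach S a b \<Longrightarrow> S \<subseteq> S' \<Longrightarrow> reach S' a b"
proof -
  assume "S \<subseteq> S'"
  then have "adj S \<subseteq> adj S'" by (auto simp: adj_def)
  then show "reach S a b \<Longrightarrow> reach S' a b" unfolding reach_def
    by (meson rtrancl_mono subsetD)
qed

lemma reach_dedge: "fst d \<in> S \<Longrightarrow> reach S (dt d) (dh d)"
  unfolding reach_def adj_def dtail_def dhead_def by (auto intro!: r_into_rtrancl)

lemma reach_chain:
  assumes "chain w" "fst ` set w \<subseteq> S" "w \<noteq> []"
  shows "\<forall>d\<in>set w. reach S (dt (hd w)) (dt d) \<and> reach S (dt (hd w)) (dh d)"
  using assms
proof (induction w)
  case (Cons a w)
  show ?case
  proof (cases "w = []")
    case True then show ?thesis using Cons.prems reach_dedge[of a S] by auto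
  next
    case False
    then have IH: "\<forall>d\<in>set w. reach S (dt (hd w)) (dt d) \<and> reach S (dt (hd w)) (dh d)"
      using Cons by (auto simp: chain_Cons)
    have "reach S (dt a) (dt (hd w))" using Cons.prems False reach_dedge[of a S]
      by (auto simp: chain_Cons)
    then show ?thesis using IH reach_dedge[of a S] Cons.prems by (auto intro: reach_trans)
  qed
qed simp

lemma reach_walk_vertices:
  assumes "walk S w" "x \<in> dt ` set w \<union> dh ` set w" "y \<in> dt ` set w \<union> dh ` set w"
  shows "reach S x y"
proof -
  have "reach S (dt (hd w)) x" "reach S (dt (hd w)) y"
    using reach_chain[of w S] assms by (auto simp: walk_def)
  then show ?thesis by (meson reach_sym reach_trans)
qed

lemma reach_walk:
  assumes "reach S a b" "a \<noteq> b"
  shows "\<exists>w. walk S w \<and> dt (hd w) = a \<and> dh (last w) = b"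
proof -
  have "a = b \<or> (\<exists>w. walk S w \<and> dt (hd w) = a \<and> dh (last w) = b)"
    using assms(1) unfolding reach_def
  proof (induction rule: rtrancl_induct)
    case (step y z)
    obtain d where d: "fst d \<in> S" "dt d = y" "dh d = z"
      using step(2) unfolding adj_def
      by (auto simp: dtail_def dhead_def) (metis fst_conv snd_conv)+
    from step(3) show ?case
    proof
      assume "a = y"
      then show ?thesis using d by (intro disjI2 exI[of _ "[d]"]) (auto simp: walk_def)
    next
      assume "\<exists>w. walk S w \<and> dt (hd w) = a \<and> dh (last w) = y"
      then obtain w where "walk S w" "dt (hd w) = a" "dh (last w) = y" by blast
      then show ?thesis using d
        by (intro disjI2 exI[of _ "w @ [d]"]) (auto simp: walk_def chain_append)
    qed
  qed simp
  with assms show ?thesis by blast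
qed

definition cnt :: "'e dedge list \<Rightarrow> 'e \<Rightarrow> nat" where
  "cnt w e = count_list w (e, True) + count_list w (e, False)"

lemma length_cnt:
  assumes "finite A" "fst ` set w \<subseteq> A"
  shows "length w = (\<Sum>e\<in>A. cnt w e)"
  using assms(2)
proof (induction w)
  case Nil
  then show ?case by (simp add: cnt_def)
next
  case (Cons a w)
  have "(\<Sum>e\<in>A. cnt (a # w) e) = (\<Sum>e\<in>A. cnt w e + (if e = fst a then 1 else 0))"
  proof (intro sum.cong refl)
    fix e
    obtain x b where a: "a = (x, b)" by (cases a)
    show "cnt (a # w) e = cnt w e + (if e = fst a then 1 else 0)"
      unfolding a cnt_def by (cases b) auto
  qed
  also have "\<dots> = (\<Sum>e\<in>A. cnt w e) + 1"
    using Cons.prems assms(1) by (simp add: sum.distrib)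
  finally show ?case using Cons by simp
qed

end

context gr
begin

lemma dt_end: "dt d = tG (fst d) \<or> dt d = hG (fst d)"
  by (auto simp: dtail_def)
lemma dh_end: "dh d = tG (fst d) \<or> dh d = hG (fst d)"
  by (auto simp: dhead_def)
lemma ends_d: "{tG (fst d), hG (fst d)} = {dt d, dh d}"
  by (auto simp: dtail_def dhead_def)

lemma walk_app: "walk S X \<Longrightarrow> walk S Y \<Longrightarrow> dh (last X) = dt (hd Y) \<Longrightarrow> walk S (X @ Y)"
  by (auto simp: walk_def chain_append)

lemma nb_app: "nb X \<Longrightarrow> nb Y \<Longrightarrow> fst (last X) \<noteq> fst (hd Y) \<Longrightarrow> nb (X @ Y)"
  by (auto simp: nb_append)

definition scyc :: "'e set \<Rightarrow> 'e dedge list \<Rightarrow> bool" where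
  "scyc S c \<longleftrightarrow> walk S c \<and> closedw c \<and> cnb c \<and> distinct (map dt c)"

definition VC :: "'e dedge list \<Rightarrow> 'v set" where
  "VC c = dt ` set c"

abbreviation EC :: "'e dedge list \<Rightarrow> 'e set" where
  "EC c \<equiv> fst ` set c"

lemma scyc_basic:
  assumes "scyc S c"
  shows "c \<noteq> []" "chain c" "nb c" "closedw c" "distinct (map fst c)" "EC c \<subseteq> S"
    "dh ` set c = VC c" "card (VC c) = length c" "card (EC c) = length c"
    "last c \<noteq> dinv (hd c)"
proof -
  have w: "walk S c" "closedw c" "cnb c" "distinct (map dt c)" using assms by (auto simp: scyc_def)
  show c: "c \<noteq> []" "chain c" "nb c" "closedw c" "EC c \<subseteq> S" "last c \<noteq> dinv (hd c)"
    using w by (auto simp: walk_def cnb_def)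
  show "distinct (map fst c)" using distinct_tails_edges[of c] c w by blast
  show "dh ` set c = VC c" using closed_heads[of c] c by (simp add: VC_def)
  show "card (VC c) = length c" using distinct_card[OF w(4)] by (simp add: VC_def)
  show "card (EC c) = length c" using distinct_card[OF \<open>distinct (map fst c)\<close>] by simp
qed

lemma scyc_edge_ends:
  assumes "scyc S c" "e \<in> EC c"
  shows "tG e \<in> VC c" "hG e \<in> VC c"
proof -
  obtain d where d: "d \<in> set c" "fst d = e" using assms by auto
  have "dt d \<in> VC c" "dh d \<in> VC c" using d scyc_basic(7)[OF assms(1)]
    by (auto simp: VC_def)
  moreover have "tG (fst d) \<in> {dt d, dh d}" "hG (fst d) \<in> {dt d, dh d}"
    using ends_d[of d] by blast+
  ultimately show "tG e \<in> VC c" "hG e \<in> VC c" using d by auto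
qed

lemma scyc_rot:
  assumes "scyc S c" "k < length c"
  shows "scyc S (rot k c)" "set (rot k c) = set c" "VC (rot k c) = VC c"
    "hd (rot k c) = c ! k"
proof -
  have b: "chain c" "closedw c" "cnb c" "walk S c" using assms by (auto simp: scyc_def walk_def)
  have "distinct (map dt c)" using assms by (simp add: scyc_def)
  then have "distinct (map dt (rot k c))"
    using assms map_rot[of dt k c] distinct_rot[of k "map dt c"] by simp
  moreover have "walk S (rot k c)" using b(4) rot_chain[OF b(1,2) assms(2)]
    unfolding walk_def rot_simps(2) by (metis rot_simps(1) length_0_conv)
  ultimately show "scyc S (rot k c)" using rot_chain[OF b(1,2) assms(2)] rot_cnb[OF b(3) assms(2)]
    unfolding scyc_def by blast
  show "set (rot k c) = set c" "VC (rot k c) = VC c" "hd (rot k c) = c ! k"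
    using assms by (auto simp: rot_simps VC_def rot_hd)
qed

lemma scyc_start:
  assumes "scyc S c" "v \<in> VC c"
  shows "\<exists>c'. scyc S c' \<and> set c' = set c \<and> VC c' = VC c \<and> dt (hd c') = v \<and> length c' = length c"
proof -
  obtain d where d: "d \<in> set c" "dt d = v" using assms(2) by (auto simp: VC_def)
  then obtain k where k: "k < length c" "c ! k = d" by (meson in_set_conv_nth)
  show ?thesis
    apply (rule exI[of _ "rot k c"])
    using scyc_rot[OF assms(1) k(1)] k d rot_simps(1)[of k c] by simp
qed

lemma scyc_is_cycle: "scyc S c \<Longrightarrow> is_cycle S tG hG c"
  unfolding is_cycle_def walk_eq closed_eq nb_eq using scyc_basic[of S c]
  by (simp add: scyc_def closedw_def)

lemma scyc_split:
  assumes "scyc S c" "a \<in> VC c" "b \<in> VC c"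
  shows "\<exists>A B. scyc S (A @ B) \<and> set (A @ B) = set c \<and> VC (A @ B) = VC c \<and>
     dt (hd (A @ B)) = a \<and> B \<noteq> [] \<and> length (A @ B) = length c \<and>
     (if a = b then A = [] else A \<noteq> [] \<and> dh (last A) = b \<and> dt (hd B) = b)"
proof -
  obtain c' where c': "scyc S c'" "set c' = set c" "VC c' = VC c" "dt (hd c') = a"
    "length c' = length c"
    using scyc_start[OF assms(1,2)] by blast
  show ?thesis
  proof (cases "a = b")
    case True
    then show ?thesis using c' scyc_basic(1)[OF c'(1)]
      by (intro exI[of _ "[]"] exI[of _ c']) auto
  next
    case False
    have "b \<in> dt ` set c'" using assms(3) c'(3) by (simp add: VC_def)
    then obtain j where j: "j < length c'" "dt (c' ! j) = b"
      by (auto simp: in_set_conv_nth)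
    have "dt (c' ! 0) = a" using c' scyc_basic(1)[OF c'(1)] by (simp add: hd_conv_nth)
    have "j \<noteq> 0"
    proof
      assume "j = 0" then show False using j False \<open>dt (c' ! 0) = a\<close> by simp
    qed
    have ch: "chain c'" using scyc_basic(2)[OF c'(1)] .
    have tn: "take j c' \<noteq> []" using \<open>j \<noteq> 0\<close> j by auto
    have "last (take j c') = take j c' ! (j - 1)" using tn j by (simp add: last_conv_nth min_def)
    also have "\<dots> = c' ! (j - 1)" using \<open>j \<noteq> 0\<close> by simp
    finally have "dh (last (take j c')) = b"
      using chain_nth[OF ch, of "j - 1"] j \<open>j \<noteq> 0\<close> by simp
    moreover have "dt (hd (drop j c')) = b" using j by (simp add: hd_drop_conv_nth)
    moreover have "drop j c' \<noteq> []" using j by simp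
    ultimately show ?thesis using c' False tn
      by (intro exI[of _ "take j c'"] exI[of _ "drop j c'"]) (simp only: append_take_drop_id, simp)
  qed
qed

lemma closed_trail_nonbridge:
  assumes "walk S c" "closedw c" "distinct (map fst c)" "d \<in> set c"
  shows "reach (S - {fst d}) (tG (fst d)) (hG (fst d))"
proof -
  obtain xs ys where c: "c = xs @ d # ys" using split_list[OF assms(4)] by blast
  have ch: "chain c" using assms(1) by (simp add: walk_def)
  have cl: "dh (last c) = dt (hd c)" using assms(2) by (simp add: closedw_def)
  have dfs: "fst d \<notin> fst ` set xs" "fst d \<notin> fst ` set ys" using assms(3) c by auto
  have r: "reach (S - {fst d}) (dh d) (dt d)"
  proof (cases "ys @ xs = []")
    case True
    then have "c = [d]" using c by simp
    then show ?thesis using cl by simp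
  next
    case False
    have chxs: "chain xs" "chain ys" "chain (d # ys)" "chain (xs @ [d])"
      using ch c by (auto simp: chain_append chain_Cons)
    have w: "walk (S - {fst d}) (ys @ xs)"
    proof -
      have "chain (ys @ xs)"
      proof (cases "xs = [] \<or> ys = []")
        case True then show ?thesis using chxs by auto
      next
        case False
        then have "last ys = last c" "hd xs = hd c" using c by auto
        then show ?thesis using chxs cl False by (auto simp: chain_append)
      qed
      moreover have "fst ` set (ys @ xs) \<subseteq> S" using assms(1) c by (auto simp: walk_def)
      moreover have "fst d \<notin> fst ` set (ys @ xs)" using dfs by (simp add: image_Un)
      ultimately have "fst ` set (ys @ xs) \<subseteq> S - {fst d}" by blast
      moreover note \<open>chain (ys @ xs)\<close>
      ultimately show ?thesis using False by (simp add: walk_def)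
    qed
    have h: "dt (hd (ys @ xs)) = dh d"
    proof (cases ys)
      case Nil
      then have "last c = d" "hd xs = hd c" using c False by auto
      then show ?thesis using cl Nil by simp
    next
      case (Cons y ys')
      then show ?thesis using chxs(3) by simp
    qed
    have l: "dh (last (ys @ xs)) = dt d"
    proof (cases xs rule: rev_cases)
      case Nil
      then have "hd c = d" "last ys = last c" using c False by auto
      then show ?thesis using cl Nil by simp
    next
      case (snoc xs' x)
      then show ?thesis using chxs(4) by (simp add: chain_append)
    qed
    have "dh d \<in> dt ` set (ys @ xs) \<union> dh ` set (ys @ xs)"
      using h False by (metis UnI1 hd_in_set image_eqI)
    moreover have "dt d \<in> dt ` set (ys @ xs) \<union> dh ` set (ys @ xs)"
      using l False by (metis UnI2 last_in_set image_eqI)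
    ultimately show ?thesis using reach_walk_vertices[OF w] by blast
  qed
  then show ?thesis using reach_sym[of "S - {fst d}"]
    by (cases "snd d") (auto simp: dtail_def dhead_def)
qed

end

context gr
begin

lemma out_set_eq:
  "{d. fst d \<in> E \<and> dt d = v} =
     (\<lambda>e. (e, True)) ` {e\<in>E. tG e = v} \<union> (\<lambda>e. (e, False)) ` {e\<in>E. hG e = v}"
proof (rule set_eqI)
  fix x :: "'e dedge"
  obtain e b where x: "x = (e, b)" by (cases x)
  show "x \<in> {d. fst d \<in> E \<and> dt d = v} \<longleftrightarrow>
    x \<in> (\<lambda>e. (e, True)) ` {e\<in>E. tG e = v} \<union> (\<lambda>e. (e, False)) ` {e\<in>E. hG e = v}"
    unfolding x by (cases b) (auto simp: dtail_def)
qed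

lemma degree_out:
  assumes "finite E"
  shows "degree E tG hG v = card {d. fst d \<in> E \<and> dt d = v}"
proof -
  have f: "finite {e\<in>E. tG e = v}" "finite {e\<in>E. hG e = v}" using assms by auto
  have "card ((\<lambda>e. (e, True)) ` {e\<in>E. tG e = v} \<union> (\<lambda>e. (e, False)) ` {e\<in>E. hG e = v})
      = card ((\<lambda>e. (e, True)) ` {e\<in>E. tG e = v}) + card ((\<lambda>e. (e, False)) ` {e\<in>E. hG e = v})"
    using f by (intro card_Un_disjoint) auto
  also have "\<dots> = card {e\<in>E. tG e = v} + card {e\<in>E. hG e = v}"
    by (subst card_image, simp add: inj_on_def)+ simp
  finally show ?thesis by (simp add: out_set_eq degree_def)
qed

lemma finite_out: "finite E \<Longrightarrow> finite {d. fst d \<in> E \<and> dt d = v}"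
  by (simp add: out_set_eq)

lemma deg2:
  assumes "finite E" "fst d1 \<in> E" "fst d2 \<in> E" "dh d1 = v" "dt d2 = v" "d2 \<noteq> dinv d1"
  shows "2 \<le> degree E tG hG v"
proof -
  have "{dinv d1, d2} \<subseteq> {d. fst d \<in> E \<and> dt d = v}" using assms by auto
  then have "card {dinv d1, d2} \<le> card {d. fst d \<in> E \<and> dt d = v}"
    using finite_out[OF assms(1)] by (rule card_mono[rotated])
  moreover have "dinv d1 \<noteq> d2" using assms(6) by (metis dinv_simps(1))
  then have "card {dinv d1, d2} = 2" by simp
  ultimately show ?thesis using degree_out[OF assms(1)] by simp
qed

lemma chain_dh_nth:
  assumes "chain P" "i < length P"
  shows "dh (P ! i) = (if Suc i < length P then dt (P ! Suc i) else dh (last P))"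
proof (cases "Suc i < length P")
  case False
  then have "i = length P - 1" "P \<noteq> []" using assms by auto
  then show ?thesis using False by (simp add: last_conv_nth)
qed (use chain_nth[OF assms(1), of i] in simp)

lemma dt_tl: "dt ` set (tl P) = {dt (P ! i) |i. 0 < i \<and> i < length P}"
proof -
  have "set (tl P) = {P ! i |i. 0 < i \<and> i < length P}"
  proof (cases P)
    case (Cons x xs)
    have "{(x # xs) ! i |i. 0 < i \<and> i < length (x # xs)} = {xs ! j |j. j < length xs}"
    proof (intro set_eqI iffI)
      fix y assume "y \<in> {(x # xs) ! i |i. 0 < i \<and> i < length (x # xs)}"
      then obtain i where "0 < i" "i < length (x # xs)" "y = (x # xs) ! i" by blast
      then show "y \<in> {xs ! j |j. j < length xs}"
        by (intro CollectI exI[of _ "i - 1"]) (cases i, auto)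
    next
      fix y assume "y \<in> {xs ! j |j. j < length xs}"
      then obtain j where "j < length xs" "y = xs ! j" by blast
      then show "y \<in> {(x # xs) ! i |i. 0 < i \<and> i < length (x # xs)}"
        by (intro CollectI exI[of _ "Suc j"]) auto
    qed
    then show ?thesis unfolding Cons by (simp add: set_conv_nth)
  qed simp
  then show ?thesis by auto
qed

lemma dh_set_sub:
  assumes "chain P" "d \<in> set P"
  shows "dh d = dh (last P) \<or> dh d \<in> dt ` set (tl P)"
proof -
  obtain i where i: "i < length P" "P ! i = d" using assms(2) by (meson in_set_conv_nth)
  show ?thesis using chain_dh_nth[OF assms(1) i(1)] i dt_tl[of P] by auto
qed

lemma dt_set_hd_tl: "P \<noteq> [] \<Longrightarrow> dt ` set P = insert (dt (hd P)) (dt ` set (tl P))"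
  by (cases P) auto

lemma card_dt_tl: "distinct (map dt P) \<Longrightarrow> card (dt ` set (tl P)) = length P - 1"
proof -
  assume "distinct (map dt P)"
  then have "distinct (map dt (tl P))" by (cases P) auto
  then show ?thesis using distinct_card by (metis length_map length_tl set_map)
qed

lemma hd_notin_tl: "distinct (map dt P) \<Longrightarrow> P \<noteq> [] \<Longrightarrow> dt (hd P) \<notin> dt ` set (tl P)"
  by (cases P) auto

lemma scyc_vertex_deg:
  assumes "scyc S c" "v \<in> VC c"
  shows "\<exists>d1\<in>set c. \<exists>d2\<in>set c. dh d1 = v \<and> dt d2 = v \<and> d2 \<noteq> dinv d1"
proof -
  obtain c' where c': "scyc S c'" "set c' = set c" "dt (hd c') = v"
    using scyc_start[OF assms] by blast
  have n: "c' \<noteq> []" "closedw c'" "last c' \<noteq> dinv (hd c')"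
    using scyc_basic(1,4,10)[OF c'(1)] by simp_all
  then have "hd c' \<noteq> dinv (last c')" by (metis dinv_simps(1))
  moreover have "last c' \<in> set c" "hd c' \<in> set c" using n(1) c'(2) by (metis last_in_set, metis hd_in_set)
  moreover have "dh (last c') = v" using n c' by (simp add: closedw_def)
  ultimately show ?thesis using c' by blast
qed

lemma path_vertex_deg:
  assumes "chain P" "nb P" "0 < i" "i < length P"
  shows "dh (P ! (i - 1)) = dt (P ! i) \<and> P ! i \<noteq> dinv (P ! (i - 1))"
  using chain_nth[OF assms(1), of "i - 1"] nb_nth[OF assms(2), of "i - 1"] assms by auto

definition ear :: "'e set \<Rightarrow> 'e dedge list \<Rightarrow> 'e dedge list \<Rightarrow> bool" where
  "ear S C Q \<longleftrightarrow> scyc S C \<and> walk S Q \<and> nb Q \<and> distinct (map dt Q) \<and>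
     dt (hd Q) \<in> VC C \<and> dh (last Q) \<in> VC C \<and>
     (\<forall>i. 0 < i \<and> i < length Q \<longrightarrow> dt (Q ! i) \<notin> VC C) \<and> fst (hd Q) \<notin> EC C"

definition bconf :: "'e set \<Rightarrow> 'e dedge list \<Rightarrow> 'e dedge list \<Rightarrow> 'e dedge list \<Rightarrow> bool" where
  "bconf S C P D \<longleftrightarrow> scyc S C \<and> scyc S D \<and> VC C \<inter> VC D = {} \<and>
     walk S P \<and> nb P \<and> distinct (map dt P) \<and> dt (hd P) \<in> VC C \<and> dh (last P) \<in> VC D \<and>
     (\<forall>i. 0 < i \<and> i < length P \<longrightarrow> dt (P ! i) \<notin> VC C \<union> VC D)"

lemma edge_off:
  assumes "scyc S C" "dt d \<notin> VC C \<or> dh d \<notin> VC C"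
  shows "fst d \<notin> EC C"
proof
  assume "fst d \<in> EC C"
  then have "tG (fst d) \<in> VC C" "hG (fst d) \<in> VC C" using scyc_edge_ends[OF assms(1)] by auto
  then show False using assms(2) dt_end[of d] dh_end[of d] by auto
qed

lemma ear_basic:
  assumes "ear S C Q"
  shows "Q \<noteq> []" "chain Q" "distinct (map fst Q)" "EC Q \<inter> EC C = {}" "EC Q \<subseteq> S"
    "dt ` set (tl Q) \<inter> VC C = {}"
proof -
  have a: "scyc S C" "walk S Q" "nb Q" "distinct (map dt Q)" "fst (hd Q) \<notin> EC C"
    "\<And>i. 0 < i \<Longrightarrow> i < length Q \<Longrightarrow> dt (Q ! i) \<notin> VC C"
    using assms by (auto simp: ear_def)
  show q: "Q \<noteq> []" "chain Q" "EC Q \<subseteq> S" using a(2) by (auto simp: walk_def)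
  show "distinct (map fst Q)" using distinct_tails_edges q a by blast
  show "dt ` set (tl Q) \<inter> VC C = {}" using a(6) dt_tl[of Q] by auto
  have "fst (Q ! i) \<notin> EC C" if "i < length Q" for i
  proof (cases i)
    case 0 then show ?thesis using a(5) q(1) by (simp add: hd_conv_nth)
  next
    case (Suc j) then show ?thesis using edge_off[OF a(1)] a(6) that by auto
  qed
  then have "\<forall>d\<in>set Q. fst d \<notin> EC C" by (metis in_set_conv_nth)
  then show "EC Q \<inter> EC C = {}" by blast
qed

lemma bconf_basic:
  assumes "bconf S C P D"
  shows "P \<noteq> []" "chain P" "distinct (map fst P)" "EC P \<inter> EC C = {}" "EC P \<inter> EC D = {}"
    "EC C \<inter> EC D = {}" "EC P \<subseteq> S" "dt ` set (tl P) \<inter> VC C = {}" "dt ` set (tl P) \<inter> VC D = {}"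
    "dt (hd P) \<noteq> dh (last P)"
proof -
  have a: "scyc S C" "scyc S D" "VC C \<inter> VC D = {}" "walk S P" "nb P" "distinct (map dt P)"
    "dt (hd P) \<in> VC C" "dh (last P) \<in> VC D"
    "\<And>i. 0 < i \<Longrightarrow> i < length P \<Longrightarrow> dt (P ! i) \<notin> VC C \<union> VC D"
    using assms by (auto simp: bconf_def)
  show q: "P \<noteq> []" "chain P" "EC P \<subseteq> S" using a(4) by (auto simp: walk_def)
  show "distinct (map fst P)" using distinct_tails_edges q a by blast
  show "dt ` set (tl P) \<inter> VC C = {}" "dt ` set (tl P) \<inter> VC D = {}"
    using a(9) dt_tl[of P] by auto
  show "dt (hd P) \<noteq> dh (last P)" using a(3,7,8) by auto
  have "fst (P ! i) \<notin> EC C \<and> fst (P ! i) \<notin> EC D" if "i < length P" for i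
  proof (cases i)
    case 0
    have h: "hd P = P ! 0" using q(1) by (simp add: hd_conv_nth)
    have "dh (P ! 0) \<notin> VC C"
      using chain_dh_nth[OF q(2), of 0] a(3,8,9) q(1) by (auto split: if_splits)
    then show ?thesis using 0 edge_off[OF a(1), of "P ! 0"] edge_off[OF a(2), of "P ! 0"]
      a(3,7) h by auto
  next
    case (Suc j) then show ?thesis using edge_off[OF a(1)] edge_off[OF a(2)] a(9) that by auto
  qed
  then have "\<forall>d\<in>set P. fst d \<notin> EC C \<and> fst d \<notin> EC D" by (metis in_set_conv_nth)
  then show "EC P \<inter> EC C = {}" "EC P \<inter> EC D = {}" by blast+
  show "EC C \<inter> EC D = {}"
  proof (rule ccontr)
    assume "EC C \<inter> EC D \<noteq> {}"
    then obtain e where "e \<in> EC C" "e \<in> EC D" by blast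
    then have "tG e \<in> VC C" "tG e \<in> VC D"
      using scyc_edge_ends(1)[OF a(1)] scyc_edge_ends(1)[OF a(2)] by auto
    then show False using a(3) by blast
  qed
qed

end

context gr
begin

lemma walk_mono: "walk S w \<Longrightarrow> EC w \<subseteq> S' \<Longrightarrow> walk S' w"
  by (simp add: walk_def)

lemma connected_from_root:
  assumes "r \<in> V0" "\<And>x. x \<in> V0 \<Longrightarrow> reach E0 r x"
  shows "connected_graph V0 E0 tG hG"
  unfolding connected_graph_def
proof (intro conjI ballI)
  show "V0 \<noteq> {}" using assms(1) by blast
  fix u v assume "u \<in> V0" "v \<in> V0"
  then have "reach E0 u v" using assms(2) reach_sym reach_trans by meson
  then show "u = v \<or> (\<exists>w. is_walk E0 tG hG w \<and> dt (hd w) = u \<and> dh (last w) = v)"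
    using reach_walk[of E0 u v] by (auto simp: walk_eq)
qed

lemma cel_intro:
  assumes "V0 \<subseteq> V" "E0 \<subseteq> E" "finite V0" "finite E0"
    "\<And>e. e \<in> E0 \<Longrightarrow> tG e \<in> V0 \<and> hG e \<in> V0"
    "connected_graph V0 E0 tG hG" "int (card V0) - int (card E0) = -1"
    "\<And>v. v \<in> V0 \<Longrightarrow> 2 \<le> degree E0 tG hG v"
  shows "(V0, E0) \<in> cel_subgraphs V E tG hG"
  using assms unfolding cel_subgraphs_def is_subgraph_def euler_char_def leafless_def
  by (auto simp: numeral_2_eq_2) (metis One_nat_def Suc_n_not_le_n assms(8) numeral_2_eq_2)

definition eV where "eV C Q = VC C \<union> dt ` set Q"
definition eE where "eE C Q = EC C \<union> EC Q"

lemma ear_props: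
  assumes "ear S C Q"
  shows "finite (eV C Q)" "finite (eE C Q)" "eE C Q \<subseteq> S"
    "card (eE C Q) = length C + length Q" "card (eV C Q) = length C + length Q - 1"
    "\<And>e. e \<in> eE C Q \<Longrightarrow> tG e \<in> eV C Q \<and> hG e \<in> eV C Q"
    "connected_graph (eV C Q) (eE C Q) tG hG"
    "\<And>v. v \<in> eV C Q \<Longrightarrow> 2 \<le> degree (eE C Q) tG hG v"
    "\<And>f. f \<in> eE C Q \<Longrightarrow> reach (eE C Q - {f}) (tG f) (hG f)"
    "Q \<noteq> []"
proof -
  have a: "scyc S C" "walk S Q" "nb Q" "distinct (map dt Q)" "dt (hd Q) \<in> VC C"
    "dh (last Q) \<in> VC C" "\<And>i. 0 < i \<Longrightarrow> i < length Q \<Longrightarrow> dt (Q ! i) \<notin> VC C"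
    "fst (hd Q) \<notin> EC C"
    using assms by (auto simp: ear_def)
  note b = ear_basic[OF assms]
  note c = scyc_basic[OF a(1)]
  show fin: "finite (eV C Q)" "finite (eE C Q)" by (auto simp: eV_def eE_def VC_def)
  show "eE C Q \<subseteq> S" using c(6) b(5) by (auto simp: eE_def)
  show "card (eE C Q) = length C + length Q"
    unfolding eE_def using c(9) b(4) distinct_card[OF b(3)]
    by (subst card_Un_disjoint) (auto simp: Int_commute)
  have eVs: "eV C Q = VC C \<union> dt ` set (tl Q)"
    using dt_set_hd_tl[OF b(1)] a(5) by (auto simp: eV_def)
  show "card (eV C Q) = length C + length Q - 1"
  proof -
    have "0 < length Q" using b(1) by simp
    have "card (eV C Q) = length C + (length Q - 1)"
      unfolding eVs using c(8) b(6) card_dt_tl[OF a(4)]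
      by (subst card_Un_disjoint) (auto simp: VC_def Int_commute)
    then show ?thesis using \<open>0 < length Q\<close> by linarith
  qed
  have wC: "walk (eE C Q) C" using a(1) by (auto simp: scyc_def walk_def eE_def)
  have wQ: "walk (eE C Q) Q" using a(2) by (auto simp: walk_def eE_def)
  show ends: "\<And>e. e \<in> eE C Q \<Longrightarrow> tG e \<in> eV C Q \<and> hG e \<in> eV C Q"
  proof -
    fix e assume "e \<in> eE C Q"
    then consider "e \<in> EC C" | d where "d \<in> set Q" "e = fst d" by (auto simp: eE_def)
    then show "tG e \<in> eV C Q \<and> hG e \<in> eV C Q"
    proof cases
      case 1 then show ?thesis using scyc_edge_ends[OF a(1)] by (auto simp: eV_def)
    next
      case 2
      have "dt d \<in> eV C Q" using 2 by (auto simp: eV_def)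
      moreover have "dh d \<in> eV C Q" using dh_set_sub[OF b(2) 2(1)] a(6) eVs by auto
      moreover have "tG e \<in> {dt d, dh d}" "hG e \<in> {dt d, dh d}" using ends_d[of d] 2 by auto
      ultimately show ?thesis by auto
    qed
  qed
  show "connected_graph (eV C Q) (eE C Q) tG hG"
  proof (rule connected_from_root[of "dt (hd Q)"])
    show "dt (hd Q) \<in> eV C Q" using a(5) by (simp add: eV_def)
    fix x assume "x \<in> eV C Q"
    then consider "x \<in> VC C" | "x \<in> dt ` set Q" by (auto simp: eV_def)
    then show "reach (eE C Q) (dt (hd Q)) x"
    proof cases
      case 1 then show ?thesis using reach_walk_vertices[OF wC] a(5) by (auto simp: VC_def)
    next
      case 2 then show ?thesis using reach_walk_vertices[OF wQ] b(1) by auto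
    qed
  qed
  show "\<And>v. v \<in> eV C Q \<Longrightarrow> 2 \<le> degree (eE C Q) tG hG v"
  proof -
    fix v assume "v \<in> eV C Q"
    then consider "v \<in> VC C" | "v \<in> dt ` set (tl Q)" using eVs by auto
    then show "2 \<le> degree (eE C Q) tG hG v"
    proof cases
      case 1
      then obtain d1 d2 where "d1 \<in> set C" "d2 \<in> set C" "dh d1 = v" "dt d2 = v" "d2 \<noteq> dinv d1"
        using scyc_vertex_deg[OF a(1)] by blast
      then show ?thesis using fin by (intro deg2[of _ d1 d2]) (auto simp: eE_def)
    next
      case 2
      then obtain i where i: "0 < i" "i < length Q" "v = dt (Q ! i)" using dt_tl[of Q] by auto
      then have "Q ! (i - 1) \<in> set Q" "Q ! i \<in> set Q" by auto
      then show ?thesis using fin path_vertex_deg[OF b(2) a(3) i(1,2)] i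
        by (intro deg2[of _ "Q ! (i - 1)" "Q ! i"]) (auto simp: eE_def)
    qed
  qed
  show "\<And>f. f \<in> eE C Q \<Longrightarrow> reach (eE C Q - {f}) (tG f) (hG f)"
  proof -
    fix f assume f: "f \<in> eE C Q"
    show "reach (eE C Q - {f}) (tG f) (hG f)"
    proof (cases "f \<in> EC C")
      case True
      then obtain d where "d \<in> set C" "f = fst d" by auto
      then show ?thesis using closed_trail_nonbridge[OF wC c(4) c(5)] by simp
    next
      case False
      then obtain d where d: "d \<in> set Q" "f = fst d" using f by (auto simp: eE_def)
      obtain A B where AB: "scyc S (A @ B)" "set (A @ B) = set C" "VC (A @ B) = VC C"
        "dt (hd (A @ B)) = dh (last Q)" "B \<noteq> []" "length (A @ B) = length C"
        "if dh (last Q) = dt (hd Q) then A = []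
         else A \<noteq> [] \<and> dh (last A) = dt (hd Q) \<and> dt (hd B) = dt (hd Q)"
        using scyc_split[OF a(1) a(6) a(5)] by blast
      show ?thesis
      proof (cases "dh (last Q) = dt (hd Q)")
        case True
        then show ?thesis using closed_trail_nonbridge[OF wQ _ b(3) d(1)] d(2)
          by (simp add: closedw_def)
      next
        case False
        then have A: "A \<noteq> []" "dh (last A) = dt (hd Q)" using AB(7) by auto
        have dAB: "distinct (map fst (A @ B))" using scyc_basic(5)[OF AB(1)] .
        have wA: "walk (eE C Q) A" using AB(1,2) A(1) unfolding scyc_def walk_def eE_def
          by (auto simp: chain_append)
        have T: "walk (eE C Q) (Q @ A)" using wQ wA AB(4) A(1) by (intro walk_app) auto
        have "closedw (Q @ A)" using A b(1) by (simp add: closedw_def)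
        moreover have "distinct (map fst (Q @ A))"
          using b(3) dAB b(4) AB(2) by auto
        ultimately show ?thesis using closed_trail_nonbridge[OF T] d by simp
      qed
    qed
  qed
  show "Q \<noteq> []" using b(1) .
qed


definition bV where "bV C P D = VC C \<union> VC D \<union> dt ` set P"
definition bE where "bE C P D = EC C \<union> EC D \<union> EC P"

lemma bconf_props:
  assumes "bconf S C P D"
  shows "finite (bV C P D)" "finite (bE C P D)" "bE C P D \<subseteq> S"
    "card (bE C P D) = length C + length D + length P"
    "card (bV C P D) = length C + length D + length P - 1"
    "\<And>e. e \<in> bE C P D \<Longrightarrow> tG e \<in> bV C P D \<and> hG e \<in> bV C P D"
    "connected_graph (bV C P D) (bE C P D) tG hG"
    "\<And>v. v \<in> bV C P D \<Longrightarrow> 2 \<le> degree (bE C P D) tG hG v"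
    "\<And>f. f \<in> EC C \<union> EC D \<Longrightarrow> reach (bE C P D - {f}) (tG f) (hG f)"
proof -
  have a: "scyc S C" "scyc S D" "VC C \<inter> VC D = {}" "walk S P" "nb P" "distinct (map dt P)"
    "dt (hd P) \<in> VC C" "dh (last P) \<in> VC D"
    "\<And>i. 0 < i \<Longrightarrow> i < length P \<Longrightarrow> dt (P ! i) \<notin> VC C \<union> VC D"
    using assms by (auto simp: bconf_def)
  note b = bconf_basic[OF assms]
  note c = scyc_basic[OF a(1)]
  note d = scyc_basic[OF a(2)]
  show fin: "finite (bV C P D)" "finite (bE C P D)" by (auto simp: bV_def bE_def VC_def)
  show "bE C P D \<subseteq> S" using c(6) d(6) b(7) by (auto simp: bE_def)
  have "card (EC C \<union> EC D) = length C + length D"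
    using c(9) d(9) b(6) by (subst card_Un_disjoint) auto
  then show "card (bE C P D) = length C + length D + length P"
    unfolding bE_def using distinct_card[OF b(3)] b(4,5)
    by (subst card_Un_disjoint) auto
  have bVs: "bV C P D = (VC C \<union> VC D) \<union> dt ` set (tl P)"
    using dt_set_hd_tl[OF b(1)] a(7) by (auto simp: bV_def)
  show "card (bV C P D) = length C + length D + length P - 1"
  proof -
    have "0 < length P" using b(1) by simp
    have "card (VC C \<union> VC D) = length C + length D"
      using c(8) d(8) a(3) by (subst card_Un_disjoint) (auto simp: VC_def)
    then have "card (bV C P D) = length C + length D + (length P - 1)"
      unfolding bVs using b(8,9) card_dt_tl[OF a(6)]
      by (subst card_Un_disjoint) (auto simp: VC_def)
    then show ?thesis using \<open>0 < length P\<close> by linarith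
  qed
  have wC: "walk (bE C P D) C" using a(1) by (auto simp: scyc_def walk_def bE_def)
  have wD: "walk (bE C P D) D" using a(2) by (auto simp: scyc_def walk_def bE_def)
  have wP: "walk (bE C P D) P" using a(4) by (auto simp: walk_def bE_def)
  show ends: "\<And>e. e \<in> bE C P D \<Longrightarrow> tG e \<in> bV C P D \<and> hG e \<in> bV C P D"
  proof -
    fix e assume "e \<in> bE C P D"
    then consider "e \<in> EC C" | "e \<in> EC D" | d where "d \<in> set P" "e = fst d"
      by (auto simp: bE_def)
    then show "tG e \<in> bV C P D \<and> hG e \<in> bV C P D"
    proof cases
      case 1 then show ?thesis using scyc_edge_ends[OF a(1)] by (auto simp: bV_def)
    next
      case 2 then show ?thesis using scyc_edge_ends[OF a(2)] by (auto simp: bV_def)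
    next
      case 3
      have "dt d \<in> bV C P D" using 3 by (auto simp: bV_def)
      moreover have "dh d \<in> bV C P D" using dh_set_sub[OF b(2) 3(1)] a(8) bVs by auto
      moreover have "tG e \<in> {dt d, dh d}" "hG e \<in> {dt d, dh d}" using ends_d[of d] 3 by auto
      ultimately show ?thesis by auto
    qed
  qed
  show "connected_graph (bV C P D) (bE C P D) tG hG"
  proof (rule connected_from_root[of "dt (hd P)"])
    show "dt (hd P) \<in> bV C P D" using a(7) by (simp add: bV_def)
    have rl: "reach (bE C P D) (dt (hd P)) (dh (last P))"
      using reach_walk_vertices[OF wP] b(1) by auto
    fix x assume "x \<in> bV C P D"
    then consider "x \<in> VC C" | "x \<in> VC D" | "x \<in> dt ` set P" by (auto simp: bV_def)
    then show "reach (bE C P D) (dt (hd P)) x"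
    proof cases
      case 1 then show ?thesis using reach_walk_vertices[OF wC] a(7) by (auto simp: VC_def)
    next
      case 2
      then have "reach (bE C P D) (dh (last P)) x"
        using reach_walk_vertices[OF wD] a(8) by (auto simp: VC_def)
      then show ?thesis using rl reach_trans by blast
    next
      case 3 then show ?thesis using reach_walk_vertices[OF wP] b(1) by auto
    qed
  qed
  show "\<And>v. v \<in> bV C P D \<Longrightarrow> 2 \<le> degree (bE C P D) tG hG v"
  proof -
    fix v assume "v \<in> bV C P D"
    then consider "v \<in> VC C" | "v \<in> VC D" | "v \<in> dt ` set (tl P)" using bVs by auto
    then show "2 \<le> degree (bE C P D) tG hG v"
    proof cases
      case 1
      then obtain d1 d2 where "d1 \<in> set C" "d2 \<in> set C" "dh d1 = v" "dt d2 = v" "d2 \<noteq> dinv d1"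
        using scyc_vertex_deg[OF a(1)] by blast
      then show ?thesis using fin by (intro deg2[of _ d1 d2]) (auto simp: bE_def)
    next
      case 2
      then obtain d1 d2 where "d1 \<in> set D" "d2 \<in> set D" "dh d1 = v" "dt d2 = v" "d2 \<noteq> dinv d1"
        using scyc_vertex_deg[OF a(2)] by blast
      then show ?thesis using fin by (intro deg2[of _ d1 d2]) (auto simp: bE_def)
    next
      case 3
      then obtain i where i: "0 < i" "i < length P" "v = dt (P ! i)" using dt_tl[of P] by auto
      then have "P ! (i - 1) \<in> set P" "P ! i \<in> set P" by auto
      then show ?thesis using fin path_vertex_deg[OF b(2) a(5) i(1,2)] i
        by (intro deg2[of _ "P ! (i - 1)" "P ! i"]) (auto simp: bE_def)
    qed
  qed
  show "\<And>f. f \<in> EC C \<union> EC D \<Longrightarrow> reach (bE C P D - {f}) (tG f) (hG f)"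
  proof -
    fix f assume "f \<in> EC C \<union> EC D"
    then consider d where "d \<in> set C" "f = fst d" | d where "d \<in> set D" "f = fst d" by auto
    then show "reach (bE C P D - {f}) (tG f) (hG f)"
    proof cases
      case 1 then show ?thesis using closed_trail_nonbridge[OF wC c(4) c(5)] by simp
    next
      case 2 then show ?thesis using closed_trail_nonbridge[OF wD d(4) d(5)] by simp
    qed
  qed
qed

lemma path_is_path:
  assumes "walk S P" "nb P" "distinct (map fst P)" "dt (hd P) \<noteq> dh (last P)"
  shows "is_path S tG hG P"
  using assms by (simp add: is_path_def walk_eq nb_eq)

lemma bconf_barbell:
  assumes "bconf S C P D"
  shows "is_barbell (bV C P D) (bE C P D) tG hG"
proof -
  have a: "scyc S C" "scyc S D" "walk S P" "nb P" "dt (hd P) \<in> VC C" "dh (last P) \<in> VC D"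
    using assms by (auto simp: bconf_def)
  note b = bconf_basic[OF assms]
  obtain C' where C': "scyc S C'" "set C' = set C" "VC C' = VC C" "dt (hd C') = dt (hd P)"
    using scyc_start[OF a(1) a(5)] by blast
  obtain D' where D': "scyc S D'" "set D' = set D" "VC D' = VC D" "dt (hd D') = dh (last P)"
    using scyc_start[OF a(2) a(6)] by blast
  have wv: "walk_vertices tG hG C' = VC C" "walk_vertices tG hG D' = VC D"
    using scyc_basic(7)[OF C'(1)] scyc_basic(7)[OF D'(1)] C'(3) D'(3)
    by (auto simp: walk_vertices_def VC_def)
  have "dh ` set P \<subseteq> VC D \<union> dt ` set P"
    using dh_set_sub[OF b(2)] a(6) b(1) by (auto simp: dt_set_hd_tl) (metis list.set_sel(2))
  then have wvP: "VC C \<union> VC D \<union> walk_vertices tG hG P = bV C P D"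
    by (auto simp: walk_vertices_def bV_def)
  have "barbell_decomp (bV C P D) (bE C P D) tG hG C' D' P"
    unfolding barbell_decomp_def
  proof (intro conjI)
    show "is_cycle (bE C P D) tG hG C'" "is_cycle (bE C P D) tG hG D'"
    proof -
      have "scyc (bE C P D) C'" using C'(1,2) unfolding scyc_def walk_def bE_def by auto
      moreover have "scyc (bE C P D) D'" using D'(1,2) unfolding scyc_def walk_def bE_def by auto
      ultimately show "is_cycle (bE C P D) tG hG C'" "is_cycle (bE C P D) tG hG D'"
        using scyc_is_cycle by blast+
    qed
    show "is_path (bE C P D) tG hG P"
      using a(3,4) b(3,10) by (intro path_is_path) (auto simp: walk_def bE_def)
    show "walk_edges C' \<inter> walk_edges D' = {}" "walk_edges C' \<inter> walk_edges P = {}"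
      "walk_edges D' \<inter> walk_edges P = {}"
      using b(4,5,6) C'(2) D'(2) by (auto simp: walk_edges_def)
    show "dtail tG hG (hd P) = dtail tG hG (hd C')" "dhead tG hG (last P) = dtail tG hG (hd D')"
      using C'(4) D'(4) by simp_all
    show "bE C P D = walk_edges C' \<union> walk_edges D' \<union> walk_edges P"
      using C'(2) D'(2) by (simp add: bE_def walk_edges_def)
    show "bV C P D = walk_vertices tG hG C' \<union> walk_vertices tG hG D' \<union> walk_vertices tG hG P"
      using wv wvP by simp
  qed
  then show ?thesis by (auto simp: is_barbell_def)
qed

end

context gr
begin

lemma rw_ends: "X \<noteq> [] \<Longrightarrow> dt (hd (rw X)) = dh (last X)"
  "X \<noteq> [] \<Longrightarrow> dh (last (rw X)) = dt (hd X)"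
  "X \<noteq> [] \<Longrightarrow> fst (hd (rw X)) = fst (last X)"
  "X \<noteq> [] \<Longrightarrow> fst (last (rw X)) = fst (hd X)"
  by (simp_all add: rw_hd_last)

lemma sym_balanced:
  fixes W :: "'x dedge list"
  assumes h: "\<And>d. count_list W d = count_list W (dinv d)"
  shows "balanced W"
  unfolding balanced_def
proof (intro allI)
  fix e :: 'x
  have "dinv (e, True) = (e, False)" by (simp add: dinv_def)
  then show "count_list W (e, True) = count_list W (e, False)" using h[of "(e, True)"] by simp
qed

lemma app_hd: "X \<noteq> [] \<Longrightarrow> hd (X @ Y) = hd X" by simp
lemma app_last: "Y \<noteq> [] \<Longrightarrow> last (X @ Y) = last Y" by simp

lemma abelian_intro:
  assumes "walk S W" "closedw W" "nb W" "balanced W"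
  shows "abelian_walk S tG hG W"
  using assms by (simp add: abelian_walk_def walk_eq closed_eq nb_eq closedw_def is_closed_def)

lemma abelian_mono: "abelian_walk S tG hG W \<Longrightarrow> S \<subseteq> S' \<Longrightarrow> abelian_walk S' tG hG W"
  by (auto simp: abelian_walk_def is_walk_def)

definition seg :: "'e set \<Rightarrow> 'e dedge list \<Rightarrow> bool" where
  "seg S X \<longleftrightarrow> walk S X \<and> nb X"

lemma seg_cat:
  assumes "seg S X" "seg S Y" "dh (last X) = dt (hd Y)" "fst (last X) \<noteq> fst (hd Y)"
  shows "seg S (X @ Y)" "dt (hd (X @ Y)) = dt (hd X)" "dh (last (X @ Y)) = dh (last Y)"
    "fst (hd (X @ Y)) = fst (hd X)" "fst (last (X @ Y)) = fst (last Y)"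
proof -
  have ne: "X \<noteq> []" "Y \<noteq> []" using assms(1,2) by (auto simp: seg_def walk_def)
  show "seg S (X @ Y)" using assms walk_app[of S X Y] nb_app[of X Y] by (simp add: seg_def)
  show "dt (hd (X @ Y)) = dt (hd X)" "dh (last (X @ Y)) = dh (last Y)"
    "fst (hd (X @ Y)) = fst (hd X)" "fst (last (X @ Y)) = fst (last Y)"
    using ne by simp_all
qed

lemma seg_rw: "seg S X \<Longrightarrow> seg S (rw X)"
  by (simp add: seg_def)

lemma seg_ne: "seg S X \<Longrightarrow> X \<noteq> []" by (simp add: seg_def walk_def)

lemma theta_walk:
  assumes "ear S C Q"
  shows "\<exists>W. abelian_walk (eE C Q) tG hG W \<and> length W = 2 * card (eE C Q)"
proof -
  have a: "scyc S C" "walk S Q" "nb Q" "dt (hd Q) \<in> VC C" "dh (last Q) \<in> VC C"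
    using assms by (auto simp: ear_def)
  note eb = ear_basic[OF assms]
  note ep = ear_props[OF assms]
  obtain A B where AB: "scyc S (A @ B)" "set (A @ B) = set C" "VC (A @ B) = VC C"
    "dt (hd (A @ B)) = dt (hd Q)" "B \<noteq> []" "length (A @ B) = length C"
    "if dt (hd Q) = dh (last Q) then A = []
     else A \<noteq> [] \<and> dh (last A) = dh (last Q) \<and> dt (hd B) = dh (last Q)"
    using scyc_split[OF a(1) a(4) a(5)] by blast
  note s = scyc_basic[OF AB(1)]
  have chA: "chain A" "chain B" "nb A" "nb B" using s(2,3) by (auto simp: chain_append nb_append)
  have cl: "dh (last B) = dt (hd (A @ B))" using s(4) AB(5) by (simp add: closedw_def)
  have wAB: "walk (eE C Q) (A @ B)" using s(1,2,6) AB(2) by (auto simp: walk_def eE_def)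
  have wA: "A \<noteq> [] \<Longrightarrow> walk (eE C Q) A" and wB: "walk (eE C Q) B"
    using wAB AB(5) by (auto simp: walk_def chain_append)
  have wQ: "walk (eE C Q) Q" using a(2) by (auto simp: walk_def eE_def)
  have dQC: "\<And>x y. x \<in> set Q \<Longrightarrow> y \<in> set (A @ B) \<Longrightarrow> fst x \<noteq> fst y"
    using eb(4) AB(2) by blast
  have Bne: "B \<noteq> []" by (rule AB(5))
  have len: "2 * card (eE C Q) = 2 * (length A + length B + length Q)"
    using ep(4) AB(6) by simp
  have cnt: "\<And>d. count_list (A @ rw Q @ rw B @ rw A @ Q @ B) d
     = count_list (A @ rw Q @ rw B @ rw A @ Q @ B) (dinv d)"
    unfolding count_list_append count_rw dinv_simps(1) by linarith
  show ?thesis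
  proof (cases "dt (hd Q) = dh (last Q)")
    case False
    then have A: "A \<noteq> []" "dh (last A) = dh (last Q)" "dt (hd B) = dh (last Q)" using AB(7) by auto
    have hA: "dt (hd A) = dt (hd Q)" using AB(4) A(1) by simp
    have lB: "dh (last B) = dt (hd Q)" using cl AB(4) by simp
    define W where "W = A @ rw Q @ rw B @ rw A @ Q @ B"
    have sA: "seg (eE C Q) A" "seg (eE C Q) (rw A)" using wA[OF A(1)] chA by (simp_all add: seg_def)
    have sB: "seg (eE C Q) B" "seg (eE C Q) (rw B)" using wB chA by (simp_all add: seg_def)
    have sQ: "seg (eE C Q) Q" "seg (eE C Q) (rw Q)" using wQ a(3) by (simp_all add: seg_def)
    have lAB: "fst (last A) \<noteq> fst (hd B)"
    proof -
      have m: "fst (last A) \<in> set (map fst A)" "fst (hd B) \<in> set (map fst B)"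
        using A(1) Bne by simp_all
      have "set (map fst A) \<inter> set (map fst B) = {}" using s(5) by (simp only: map_append distinct_append)
      then show ?thesis using m by (metis disjoint_iff)
    qed
    have mm: "hd Q \<in> set Q" "last Q \<in> set Q" "last A \<in> set (A @ B)" "last B \<in> set (A @ B)"
      "hd B \<in> set (A @ B)" "hd A \<in> set (A @ B)" using A(1) Bne eb(1) by simp_all
    have QA: "fst (hd Q) \<noteq> fst (last A)" "fst (last Q) \<noteq> fst (last A)"
      "fst (hd Q) \<noteq> fst (last B)" "fst (last Q) \<noteq> fst (hd B)" "fst (hd A) \<noteq> fst (hd Q)"
      using dQC[OF mm(1) mm(3)] dQC[OF mm(2) mm(3)] dQC[OF mm(1) mm(4)] dQC[OF mm(2) mm(5)]
        dQC[OF mm(1) mm(6)] by auto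
    note r = rw_ends[OF A(1)] rw_ends[OF Bne] rw_ends[OF eb(1)]
    note c5 = seg_cat[OF sQ(1) sB(1) A(3)[symmetric] QA(4)]
    have j4: "dh (last (rw A)) = dt (hd (Q @ B))" "fst (last (rw A)) \<noteq> fst (hd (Q @ B))"
      using r c5 hA QA by simp_all
    note c4 = seg_cat[OF sA(2) c5(1) j4]
    have j3: "dh (last (rw B)) = dt (hd (rw A @ Q @ B))" "fst (last (rw B)) \<noteq> fst (hd (rw A @ Q @ B))"
      using r c4 A lAB by simp_all
    note c3 = seg_cat[OF sB(2) c4(1) j3]
    have j2: "dh (last (rw Q)) = dt (hd (rw B @ rw A @ Q @ B))"
      "fst (last (rw Q)) \<noteq> fst (hd (rw B @ rw A @ Q @ B))"
      using r c3 lB QA by simp_all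
    note c2 = seg_cat[OF sQ(2) c3(1) j2]
    have j1: "dh (last A) = dt (hd (rw Q @ rw B @ rw A @ Q @ B))"
      "fst (last A) \<noteq> fst (hd (rw Q @ rw B @ rw A @ Q @ B))"
      using r c2 A QA by simp_all
    note c1 = seg_cat[OF sA(1) c2(1) j1]
    have s1: "seg (eE C Q) W" "dt (hd W) = dt (hd A)" "dh (last W) = dh (last B)"
      unfolding W_def using c1 c2 c3 c4 c5 r by simp_all
    have w: "walk (eE C Q) W" and n: "nb W" using s1 by (simp_all add: seg_def)
    have c: "closedw W" unfolding closedw_def using s1 lB hA by simp
    have "abelian_walk (eE C Q) tG hG W"
      using w c n sym_balanced[of W] cnt by (intro abelian_intro) (auto simp: W_def)
    moreover have "length W = 2 * card (eE C Q)" using len by (simp add: W_def)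
    ultimately show ?thesis by blast
  next
    case True
    then have A: "A = []" using AB(7) by auto
    have hB: "dt (hd B) = dt (hd Q)" using AB(4) A by simp
    have lB: "dh (last B) = dt (hd Q)" using cl AB(4) by simp
    define W where "W = rw Q @ rw B @ Q @ B"
    have sB: "seg (eE C Q) B" "seg (eE C Q) (rw B)" using wB chA by (simp_all add: seg_def)
    have sQ: "seg (eE C Q) Q" "seg (eE C Q) (rw Q)" using wQ a(3) by (simp_all add: seg_def)
    have mm: "hd Q \<in> set Q" "last Q \<in> set Q" "last B \<in> set (A @ B)"
      "hd B \<in> set (A @ B)" using Bne eb(1) by simp_all
    have QA: "fst (hd Q) \<noteq> fst (last B)" "fst (last Q) \<noteq> fst (hd B)" "fst (hd B) \<noteq> fst (hd Q)"
      using dQC[OF mm(1) mm(3)] dQC[OF mm(2) mm(4)] dQC[OF mm(1) mm(4)] by auto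
    note r = rw_ends[OF Bne] rw_ends[OF eb(1)]
    have j3: "dh (last Q) = dt (hd B)" using True hB by simp
    note c3 = seg_cat[OF sQ(1) sB(1) j3 QA(2)]
    have j2: "dh (last (rw B)) = dt (hd (Q @ B))" "fst (last (rw B)) \<noteq> fst (hd (Q @ B))"
      using r c3 hB QA by simp_all
    note c2 = seg_cat[OF sB(2) c3(1) j2]
    have j1: "dh (last (rw Q)) = dt (hd (rw B @ Q @ B))" "fst (last (rw Q)) \<noteq> fst (hd (rw B @ Q @ B))"
      using r c2 lB QA by simp_all
    note c1 = seg_cat[OF sQ(2) c2(1) j1]
    have s1: "seg (eE C Q) W" "dt (hd W) = dh (last Q)" "dh (last W) = dh (last B)"
      unfolding W_def using c1 c2 c3 r by simp_all
    have w: "walk (eE C Q) W" and n: "nb W" using s1 by (simp_all add: seg_def)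
    have c: "closedw W" unfolding closedw_def using s1 lB True by simp
    have "abelian_walk (eE C Q) tG hG W"
      using w c n sym_balanced[of W] cnt A by (intro abelian_intro) (auto simp: W_def)
    moreover have "length W = 2 * card (eE C Q)" using len A by (simp add: W_def)
    ultimately show ?thesis by blast
  qed
qed

end

context gr
begin

definition succp :: "'e set \<Rightarrow> bool" where
  "succp S \<longleftrightarrow> (\<forall>d. fst d \<in> S \<longrightarrow> (\<exists>d'. fst d' \<in> S \<and> dt d' = dh d \<and> d' \<noteq> dinv d))"

lemma nb_last_hd:
  assumes "chain c" "nb c" "distinct (map dt c)" "c \<noteq> []"
  shows "last c \<noteq> dinv (hd c)"
proof
  assume eq: "last c = dinv (hd c)"
  show False
  proof (cases "length c = 1")
    case True
    then have "last c = hd c" by (cases c) auto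
    then show False using eq by simp
  next
    case False
    then have l: "1 < length c" using assms(4) by (cases c) auto
    have "hd c = c ! 0" "last c = c ! (length c - 1)" using assms(4) by (simp_all add: hd_conv_nth last_conv_nth)
    have "dt (last c) = dh (hd c)" using eq by simp
    then have "dt (c ! (length c - 1)) = dh (c ! 0)"
      using \<open>hd c = c ! 0\<close> \<open>last c = c ! (length c - 1)\<close> by simp
    also have "\<dots> = dt (c ! 1)" using chain_nth[OF assms(1), of 0] l by simp
    finally have "length c - 1 = 1" using dist_nth[OF assms(3), of "length c - 1" 1] l by simp
    then have "c ! 1 = dinv (c ! 0)" using eq \<open>hd c = c ! 0\<close> \<open>last c = c ! (length c - 1)\<close> by simp
    then show False using nb_nth[OF assms(2), of 0] l by simp
  qed
qed

lemma scyc_intro: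
  assumes "walk S c" "closedw c" "nb c" "distinct (map dt c)"
  shows "scyc S c"
  using assms nb_last_hd[of c] by (simp add: scyc_def cnb_def walk_def)

lemma succ_seq:
  assumes "succp S" "fst d0 \<in> S"
  shows "\<exists>f. f 0 = d0 \<and> (\<forall>n. fst (f n) \<in> S \<and> dt (f (Suc n)) = dh (f n) \<and> f (Suc n) \<noteq> dinv (f n))"
proof -
  define nx where "nx d = (SOME d'. fst d' \<in> S \<and> dt d' = dh d \<and> d' \<noteq> dinv d)" for d
  have nx: "fst (nx d) \<in> S \<and> dt (nx d) = dh d \<and> nx d \<noteq> dinv d" if "fst d \<in> S" for d
  proof -
    have "\<exists>d'. fst d' \<in> S \<and> dt d' = dh d \<and> d' \<noteq> dinv d"
      using assms(1) that unfolding succp_def by blast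
    then show ?thesis unfolding nx_def by (rule someI_ex)
  qed
  define f where "f n = rec_nat d0 (\<lambda>_ d. nx d) n" for n
  have f0: "f 0 = d0" and fS: "f (Suc n) = nx (f n)" for n by (simp_all add: f_def)
  have inS: "fst (f n) \<in> S" for n
  proof (induction n)
    case 0 then show ?case using assms(2) f0 by simp
  next
    case (Suc n) then show ?case using nx[of "f n"] fS[of n] by simp
  qed
  have "\<forall>n. fst (f n) \<in> S \<and> dt (f (Suc n)) = dh (f n) \<and> f (Suc n) \<noteq> dinv (f n)"
  proof
    fix n show "fst (f n) \<in> S \<and> dt (f (Suc n)) = dh (f n) \<and> f (Suc n) \<noteq> dinv (f n)"
      using inS[of n] nx[of "f n"] fS[of n] by simp
  qed
  then show ?thesis using f0 by blast
qed

lemma finite_vs: "finite S \<Longrightarrow> finite (dt ` {d. fst d \<in> S})"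
proof -
  assume fS: "finite S"
  have sub: "{d :: 'e dedge. fst d \<in> S} \<subseteq> S \<times> (UNIV :: bool set)" by auto
  have "finite (S \<times> (UNIV :: bool set))" using fS by (simp add: finite_cartesian_product)
  then have "finite {d :: 'e dedge. fst d \<in> S}" by (rule finite_subset[OF sub])
  then show ?thesis by (rule finite_imageI)
qed

lemma grow:
  assumes "finite S" "succp S" "fst d0 \<in> S"
  shows "\<exists>ws. walk S ws \<and> nb ws \<and> hd ws = d0 \<and> distinct (map dt ws) \<and>
     (\<forall>i. 0 < i \<and> i < length ws \<longrightarrow> dt (ws ! i) \<notin> T) \<and>
     (dh (last ws) \<in> T \<or> dh (last ws) \<in> dt ` set ws)"
proof -
  obtain f where f: "f 0 = d0" "\<And>n. fst (f n) \<in> S" "\<And>n. dt (f (Suc n)) = dh (f n)"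
    "\<And>n. f (Suc n) \<noteq> dinv (f n)"
    using succ_seq[OF assms(2,3)] by blast
  define P where "P k \<longleftrightarrow> dh (f k) \<in> T \<or> (\<exists>i\<le>k. dh (f k) = dt (f i))" for k
  define VS where "VS = dt ` {d. fst d \<in> S}"
  have fin: "finite VS" using finite_vs[OF assms(1)] by (simp add: VS_def)
  have "\<exists>k. P k"
  proof -
    have "(\<lambda>i. dt (f i)) ` {0..card VS} \<subseteq> VS" using f(2) by (auto simp: VS_def)
    moreover have "card VS < card {0..card VS}" by simp
    ultimately have "\<not> inj_on (\<lambda>i. dt (f i)) {0..card VS}"
      using card_inj_on_le[OF _ _ fin] by fastforce
    then obtain i j where ij: "i \<noteq> j" "dt (f i) = dt (f j)" by (auto simp: inj_on_def)
    show ?thesis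
    proof (cases "i < j")
      case True
      then obtain j' where "j = Suc j'" by (cases j) auto
      then have "dh (f j') = dt (f i)" "i \<le> j'" using ij True f(3)[of j'] by auto
      then have "P j'" unfolding P_def by blast
      then show ?thesis ..
    next
      case False
      then have "j < i" using ij by simp
      then obtain i' where "i = Suc i'" by (cases i) auto
      then have "dh (f i') = dt (f j)" "j \<le> i'" using ij \<open>j < i\<close> f(3)[of i'] by auto
      then have "P i'" unfolding P_def by blast
      then show ?thesis ..
    qed
  qed
  define k where "k = (LEAST k. P k)"
  have Pk: "P k" unfolding k_def using \<open>\<exists>k. P k\<close> by (rule LeastI_ex)
  have notP: "\<not> P m" if "m < k" for m using not_less_Least[of m P] that by (simp add: k_def)
  define ws where "ws = map f [0..<Suc k]"
  have len: "length ws = Suc k" and nth: "\<And>i. i < Suc k \<Longrightarrow> ws ! i = f i"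
    by (simp_all add: ws_def del: upt_Suc)
  have ne: "ws \<noteq> []" using len by auto
  have hd: "hd ws = d0" using nth[of 0] ne f(1) by (simp add: hd_conv_nth)
  have last: "last ws = f k" using nth[of k] ne len by (simp add: last_conv_nth)
  have "fst ` set ws \<subseteq> S" using f(2) by (auto simp: ws_def)
  moreover have "chain ws" unfolding chain_iff_nth using f(3) nth len by simp
  ultimately have walk: "walk S ws" using ne by (simp add: walk_def)
  have nbw: "nb ws" unfolding nb_iff_nth using f(4) nth len by auto
  have dist: "distinct (map dt ws)"
  proof -
    have "dt (f i) \<noteq> dt (f j)" if "i < j" "j \<le> k" for i j
    proof
      assume e: "dt (f i) = dt (f j)"
      obtain j' where j': "j = Suc j'" using \<open>i < j\<close> by (cases j) auto
      have "dh (f j') = dt (f i)" "i \<le> j'" using e j' that f(3)[of j'] by auto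
      then have "P j'" unfolding P_def by blast
      then show False using notP[of j'] j' that by simp
    qed
    then have "inj_on (\<lambda>i. dt (f i)) {0..<Suc k}" unfolding inj_on_def
      by (metis atLeastLessThan_iff less_Suc_eq_le linorder_neqE_nat)
    then show ?thesis by (simp add: ws_def distinct_map comp_def del: upt_Suc)
  qed
  have offT: "\<forall>i. 0 < i \<and> i < length ws \<longrightarrow> dt (ws ! i) \<notin> T"
  proof (intro allI impI)
    fix i assume i: "0 < i \<and> i < length ws"
    then obtain i' where i': "i = Suc i'" by (cases i) auto
    have "dt (ws ! i) = dh (f i')" using nth[of i] i i' len f(3) by simp
    moreover have "\<not> P i'" using notP[of i'] i i' len by simp
    ultimately show "dt (ws ! i) \<notin> T" by (simp add: P_def)
  qed
  have "dh (last ws) \<in> T \<or> dh (last ws) \<in> dt ` set ws"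
  proof -
    from Pk consider "dh (f k) \<in> T" | i where "i \<le> k" "dh (f k) = dt (f i)" by (auto simp: P_def)
    then show ?thesis
    proof cases
      case 2
      then have "f i \<in> set ws" using nth[of i] len by (metis le_imp_less_Suc nth_mem)
      then show ?thesis using 2 last by auto
    qed (use last in auto)
  qed
  then show ?thesis using walk nbw hd dist offT by blast
qed


lemma in_set_drop_nth: "x \<in> set (drop j ws) \<Longrightarrow> \<exists>m. j \<le> m \<and> m < length ws \<and> x = ws ! m"
proof -
  assume "x \<in> set (drop j ws)"
  then obtain m' where "m' < length (drop j ws)" "drop j ws ! m' = x" by (auto simp: in_set_conv_nth)
  then show ?thesis by (intro exI[of _ "j + m'"]) auto
qed

lemma drop_cyc:
  assumes "walk S ws" "nb ws" "distinct (map dt ws)" "j < length ws" "dh (last ws) = dt (ws ! j)"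
  shows "scyc S (drop j ws)"
proof (rule scyc_intro)
  have ne: "drop j ws \<noteq> []" using assms(4) by simp
  show "walk S (drop j ws)" using assms(1) ne chain_drop[of ws j]
    by (auto simp: walk_def dest: in_set_dropD)
  show "closedw (drop j ws)" using assms(4,5) ne by (simp add: closedw_def hd_drop_conv_nth)
  show "nb (drop j ws)" using nb_drop[OF assms(2)] .
  show "distinct (map dt (drop j ws))" using assms(3) by (simp add: drop_map[symmetric] distinct_drop)
qed

lemma cyc_exists:
  assumes "finite S" "succp S" "S \<noteq> {}"
  shows "\<exists>C. scyc S C"
proof -
  obtain e where e: "e \<in> S" using assms(3) by blast
  obtain ws where ws: "walk S ws" "nb ws" "distinct (map dt ws)"
    "dh (last ws) \<in> ({} :: 'v set) \<or> dh (last ws) \<in> dt ` set ws"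
    using grow[OF assms(1,2), of "(e, True)" "{}"] e by auto
  then obtain j where "j < length ws" "dh (last ws) = dt (ws ! j)"
    by (auto simp: in_set_conv_nth)
  then show ?thesis using drop_cyc[OF ws(1-3)] by blast
qed

lemma grow_cycle:
  assumes "finite S" "succp S" "scyc S C" "fst d0 \<in> S" "fst d0 \<notin> EC C" "dt d0 \<in> VC C"
  shows "(\<exists>Q. ear S C Q) \<or> (\<exists>P D. bconf S C P D)"
proof -
  obtain ws where ws: "walk S ws" "nb ws" "hd ws = d0" "distinct (map dt ws)"
    "\<forall>i. 0 < i \<and> i < length ws \<longrightarrow> dt (ws ! i) \<notin> VC C"
    "dh (last ws) \<in> VC C \<or> dh (last ws) \<in> dt ` set ws"
    using grow[OF assms(1,2,4), of "VC C"] by blast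
  have ne: "ws \<noteq> []" using ws(1) by (simp add: walk_def)
  have chw: "chain ws" using ws(1) by (simp add: walk_def)
  show ?thesis
  proof (cases "dh (last ws) \<in> VC C")
    case True
    then have "ear S C ws" using assms(3,5,6) ws by (simp add: ear_def)
    then show ?thesis by blast
  next
    case False
    then obtain j where j: "j < length ws" "dh (last ws) = dt (ws ! j)"
      using ws(6) by (auto simp: in_set_conv_nth)
    have "j \<noteq> 0"
    proof
      assume "j = 0"
      then have "dh (last ws) = dt d0" using j ws(3) ne by (simp add: hd_conv_nth)
      then show False using False assms(6) by simp
    qed
    define P where "P = take j ws"
    define D where "D = drop j ws"
    have sD: "scyc S D" using drop_cyc[OF ws(1,2,4) j] by (simp add: D_def)
    have VD: "\<And>x. x \<in> VC D \<Longrightarrow> \<exists>m. j \<le> m \<and> m < length ws \<and> x = dt (ws ! m)"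
      unfolding VC_def D_def using in_set_drop_nth by fastforce
    have disj: "VC C \<inter> VC D = {}"
    proof (rule ccontr)
      assume "VC C \<inter> VC D \<noteq> {}"
      then obtain x where "x \<in> VC C" "x \<in> VC D" by blast
      then show False using VD ws(5) \<open>j \<noteq> 0\<close> by fastforce
    qed
    have Pne: "P \<noteq> []" using \<open>j \<noteq> 0\<close> ne by (simp add: P_def)
    have wP: "walk S P" using ws(1) Pne chain_take[of ws j]
      by (auto simp: walk_def P_def dest: in_set_takeD)
    have nP: "nb P" using nb_take[OF ws(2)] by (simp add: P_def)
    have dP: "distinct (map dt P)" using ws(4) by (simp add: P_def take_map[symmetric])
    have hP: "dt (hd P) \<in> VC C" using Pne ws(3) assms(6) by (simp add: P_def)
    have lP: "dh (last P) = dt (ws ! j)"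
    proof -
      have "last P = ws ! (j - 1)" using Pne j by (simp add: P_def last_conv_nth min_def)
      then show ?thesis using chain_nth[OF chw, of "j - 1"] j \<open>j \<noteq> 0\<close> by simp
    qed
    have "dt (ws ! j) \<in> VC D" using j by (simp add: VC_def D_def hd_drop_conv_nth[symmetric])
    then have lP': "dh (last P) \<in> VC D" using lP by simp
    have inner: "\<forall>i. 0 < i \<and> i < length P \<longrightarrow> dt (P ! i) \<notin> VC C \<union> VC D"
    proof (intro allI impI)
      fix i assume i: "0 < i \<and> i < length P"
      then have ij: "i < j" "P ! i = ws ! i" using j by (auto simp: P_def)
      have "dt (ws ! i) \<notin> VC C" using ws(5) i ij j by simp
      moreover have "dt (ws ! i) \<notin> VC D"
      proof
        assume "dt (ws ! i) \<in> VC D"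
        then obtain m where m: "j \<le> m" "m < length ws" "dt (ws ! i) = dt (ws ! m)" using VD by blast
        then have "i = m" using dist_nth[OF ws(4), of i m] ij j by simp
        then show False using m ij by simp
      qed
      ultimately show "dt (P ! i) \<notin> VC C \<union> VC D" using ij by simp
    qed
    have "bconf S C P D" unfolding bconf_def using assms(3) sD disj wP nP dP hP lP' inner by blast
    then show ?thesis by blast
  qed
qed

end

context gr
begin

lemma exit_edge:
  assumes "reach S a b" "a \<in> A" "b \<notin> A"
  shows "\<exists>e\<in>S. (tG e \<in> A \<and> hG e \<notin> A) \<or> (hG e \<in> A \<and> tG e \<notin> A)"
proof -
  have "b \<notin> A \<longrightarrow> (\<exists>e\<in>S. (tG e \<in> A \<and> hG e \<notin> A) \<or> (hG e \<in> A \<and> tG e \<notin> A))"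
    using assms(1) unfolding reach_def
  proof (induction rule: rtrancl_induct)
    case base then show ?case using assms(2) by simp
  next
    case (step y z)
    show ?case
    proof (cases "y \<in> A")
      case True
      from step(2) obtain e where "e \<in> S" "(y, z) = (tG e, hG e) \<or> (y, z) = (hG e, tG e)"
        unfolding adj_def by blast
      then show ?thesis using True by auto
    next
      case False then show ?thesis using step(3) by simp
    qed
  qed
  then show ?thesis using assms(3) by simp
qed

lemma conn_reach:
  assumes "connected_graph V E tG hG" "u \<in> V" "v \<in> V"
  shows "reach E u v"
proof -
  from assms have "u = v \<or> (\<exists>w. walk E w \<and> dt (hd w) = u \<and> dh (last w) = v)"
    by (auto simp: connected_graph_def walk_eq)
  then show ?thesis
  proof
    assume "\<exists>w. walk E w \<and> dt (hd w) = u \<and> dh (last w) = v"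
    then obtain w where w: "walk E w" "dt (hd w) = u" "dh (last w) = v" by blast
    have "w \<noteq> []" using w(1) by (simp add: walk_def)
    then show ?thesis using reach_walk_vertices[OF w(1), of u v] w by auto
  qed simp
qed

lemma handshake:
  assumes "finite V" "finite E" "\<forall>e\<in>E. tG e \<in> V \<and> hG e \<in> V"
  shows "(\<Sum>v\<in>V. degree E tG hG v) = 2 * card E"
proof -
  have part: "(\<Sum>v\<in>V. card {e\<in>E. g e = v}) = card E" if g: "\<forall>e\<in>E. g e \<in> V" for g :: "'e \<Rightarrow> 'v"
  proof -
    have "card (\<Union>v\<in>V. {e\<in>E. g e = v}) = (\<Sum>v\<in>V. card {e\<in>E. g e = v})"
      using assms(1,2) by (intro card_UN_disjoint) auto
    moreover have "(\<Union>v\<in>V. {e\<in>E. g e = v}) = E" using g by auto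
    ultimately show ?thesis by simp
  qed
  have "(\<Sum>v\<in>V. degree E tG hG v) =
     (\<Sum>v\<in>V. card {e\<in>E. tG e = v}) + (\<Sum>v\<in>V. card {e\<in>E. hG e = v})"
    by (simp add: degree_def sum.distrib)
  also have "\<dots> = 2 * card E" using part[of tG] part[of hG] assms(3) by simp
  finally show ?thesis .
qed

lemma degree_mono:
  assumes "finite E'" "E0 \<subseteq> E'"
  shows "degree E0 tG hG v \<le> degree E' tG hG v"
proof -
  have "finite E0" using assms finite_subset by blast
  then show ?thesis using degree_out[OF assms(1)] degree_out[of E0] assms
    by (simp add: card_mono finite_out subset_iff)
qed

lemma sat:
  assumes fV: "finite V'" and fE: "finite E'" and sub: "V0 \<subseteq> V'" "E0 \<subseteq> E'"
    and e0: "\<forall>e\<in>E0. tG e \<in> V0 \<and> hG e \<in> V0" and e1: "\<forall>e\<in>E'. tG e \<in> V' \<and> hG e \<in> V'"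
    and con: "connected_graph V' E' tG hG" and deg: "\<forall>v\<in>V'. 2 \<le> degree E' tG hG v"
    and c0: "int (card V0) - int (card E0) = -1" and c1: "int (card V') - int (card E') = -1"
  shows "V0 = V' \<and> E0 = E'"
proof -
  have fV0: "finite V0" and fE0: "finite E0" using sub fV fE finite_subset by blast+
  have h1: "(\<Sum>v\<in>V'. degree E' tG hG v) = 2 * card E'" using handshake[OF fV fE e1] .
  have h0: "(\<Sum>v\<in>V0. degree E0 tG hG v) = 2 * card E0" using handshake[OF fV0 fE0 e0] .
  have mono: "\<And>v. degree E0 tG hG v \<le> degree E' tG hG v" using degree_mono[OF fE sub(2)] .
  have split: "(\<Sum>v\<in>V'. degree E' tG hG v) = (\<Sum>v\<in>V0. degree E' tG hG v) + (\<Sum>v\<in>V'-V0. degree E' tG hG v)"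
    using fV sub(1) by (metis add.commute sum.subset_diff)
  have ge2: "2 * card (V' - V0) \<le> (\<Sum>v\<in>V'-V0. degree E' tG hG v)"
  proof -
    have "(\<Sum>v\<in>V'-V0. (2::nat)) \<le> (\<Sum>v\<in>V'-V0. degree E' tG hG v)"
      using deg by (intro sum_mono) auto
    then show ?thesis by simp
  qed
  have cd: "card (V' - V0) = card V' - card V0" using card_Diff_subset[OF fV0 sub(1)] .
  have cle: "card V0 \<le> card V'" using card_mono[OF fV sub(1)] .
  have s0: "(\<Sum>v\<in>V0. degree E0 tG hG v) \<le> (\<Sum>v\<in>V0. degree E' tG hG v)"
    using mono by (intro sum_mono) auto
  have eqs: "(\<Sum>v\<in>V0. degree E' tG hG v) = (\<Sum>v\<in>V0. degree E0 tG hG v)"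
    using h1 h0 split ge2 cd cle c0 c1 s0 by linarith
  have degeq: "degree E0 tG hG v = degree E' tG hG v" if "v \<in> V0" for v
  proof (rule ccontr)
    assume "degree E0 tG hG v \<noteq> degree E' tG hG v"
    then have "degree E0 tG hG v < degree E' tG hG v" using mono[of v] by simp
    then have "(\<Sum>v\<in>V0. degree E0 tG hG v) < (\<Sum>v\<in>V0. degree E' tG hG v)"
      using fV0 that mono by (intro sum_strict_mono_ex1) auto
    then show False using eqs by simp
  qed
  have outeq: "{d. fst d \<in> E0 \<and> dt d = v} = {d. fst d \<in> E' \<and> dt d = v}" if "v \<in> V0" for v
  proof (rule card_subset_eq)
    show "finite {d. fst d \<in> E' \<and> dt d = v}" using finite_out[OF fE] .
    show "{d. fst d \<in> E0 \<and> dt d = v} \<subseteq> {d. fst d \<in> E' \<and> dt d = v}" using sub(2) by auto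
    show "card {d. fst d \<in> E0 \<and> dt d = v} = card {d. fst d \<in> E' \<and> dt d = v}"
      using degeq[OF that] degree_out[OF fE0] degree_out[OF fE] by simp
  qed
  have key: "e \<in> E0" if "e \<in> E'" "tG e \<in> V0 \<or> hG e \<in> V0" for e
  proof -
    from that(2) show ?thesis
    proof
      assume "tG e \<in> V0"
      have "(e, True) \<in> {d. fst d \<in> E' \<and> dt d = tG e}" using that(1) by (simp add: dtail_def)
      then have "(e, True) \<in> {d. fst d \<in> E0 \<and> dt d = tG e}"
        using outeq[OF \<open>tG e \<in> V0\<close>] by blast
      then show ?thesis by simp
    next
      assume "hG e \<in> V0"
      have "(e, False) \<in> {d. fst d \<in> E' \<and> dt d = hG e}" using that(1) by (simp add: dtail_def)
      then have "(e, False) \<in> {d. fst d \<in> E0 \<and> dt d = hG e}"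
        using outeq[OF \<open>hG e \<in> V0\<close>] by blast
      then show ?thesis by simp
    qed
  qed
  have "E0 \<noteq> {}" using c0 by auto
  then obtain r where r: "r \<in> V0" using e0 by blast
  have VV: "V' \<subseteq> V0"
  proof
    fix v assume v: "v \<in> V'"
    show "v \<in> V0"
    proof (rule ccontr)
      assume "v \<notin> V0"
      have "reach E' r v" using conn_reach[OF con] r v sub(1) by blast
      then obtain e where "e \<in> E'" "(tG e \<in> V0 \<and> hG e \<notin> V0) \<or> (hG e \<in> V0 \<and> tG e \<notin> V0)"
        using exit_edge[OF _ r \<open>v \<notin> V0\<close>] by blast
      then show False using key e0 by blast
    qed
  qed
  then have "V0 = V'" using sub(1) by blast
  moreover have "E' \<subseteq> E0" using key e1 VV by blast
  ultimately show ?thesis using sub(2) by blast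
qed

end

context gr
begin

lemma dt_in: "fst d \<in> E \<Longrightarrow> \<forall>e\<in>E. tG e \<in> V \<and> hG e \<in> V \<Longrightarrow> dt d \<in> V"
  using dt_end[of d] by auto
lemma dh_in: "fst d \<in> E \<Longrightarrow> \<forall>e\<in>E. tG e \<in> V \<and> hG e \<in> V \<Longrightarrow> dh d \<in> V"
  using dh_end[of d] by auto

lemma cel_facts:
  assumes "(V', E') \<in> cel_subgraphs V E tG hG"
  shows "finite V'" "finite E'" "V' \<subseteq> V" "E' \<subseteq> E" "\<forall>e\<in>E'. tG e \<in> V' \<and> hG e \<in> V'"
    "connected_graph V' E' tG hG" "int (card V') - int (card E') = -1"
    "\<forall>v\<in>V'. 2 \<le> degree E' tG hG v"
proof -
  have a: "finite V'" "finite E'" "V' \<subseteq> V" "E' \<subseteq> E" "\<forall>e\<in>E'. tG e \<in> V' \<and> hG e \<in> V'"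
    "connected_graph V' E' tG hG" "int (card V') - int (card E') = -1"
    "\<forall>v\<in>V'. degree E' tG hG v \<noteq> 1"
    using assms by (auto simp: cel_subgraphs_def is_subgraph_def euler_char_def leafless_def)
  show "finite V'" "finite E'" "V' \<subseteq> V" "E' \<subseteq> E" "\<forall>e\<in>E'. tG e \<in> V' \<and> hG e \<in> V'"
    "connected_graph V' E' tG hG" "int (card V') - int (card E') = -1" using a by simp_all
  show "\<forall>v\<in>V'. 2 \<le> degree E' tG hG v"
  proof
    fix v assume v: "v \<in> V'"
    have "\<exists>d. fst d \<in> E' \<and> dt d = v"
    proof (cases "\<exists>u\<in>V'. u \<noteq> v")
      case True
      then obtain u where u: "u \<in> V'" "u \<noteq> v" by blast
      then obtain w where w: "is_walk E' tG hG w" "dt (hd w) = v"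
        using a(6) v unfolding connected_graph_def by metis
      then have "w \<noteq> []" "fst (hd w) \<in> E'" by (auto simp: walk_eq walk_def)
      then show ?thesis using w(2) by blast
    next
      case False
      have "E' \<noteq> {}" using a(7) by auto
      then obtain e where "e \<in> E'" by blast
      then have "tG e = v" using a(5) False by blast
      then show ?thesis using \<open>e \<in> E'\<close> by (intro exI[of _ "(e, True)"]) (simp add: dtail_def)
    qed
    then have "{d. fst d \<in> E' \<and> dt d = v} \<noteq> {}" by blast
    then have "card {d. fst d \<in> E' \<and> dt d = v} \<noteq> 0"
      using card_0_eq[OF finite_out[OF a(2)]] by blast
    then have "degree E' tG hG v \<noteq> 0" using degree_out[OF a(2)] by simp
    moreover have "degree E' tG hG v \<noteq> 1" using a(8) v by blast
    ultimately show "2 \<le> degree E' tG hG v" by linarith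
  qed
qed

lemma succp_deg:
  assumes "finite E'" "\<forall>e\<in>E'. tG e \<in> V' \<and> hG e \<in> V'" "\<forall>v\<in>V'. 2 \<le> degree E' tG hG v"
  shows "succp E'"
  unfolding succp_def
proof (intro allI impI)
  fix d :: "'e dedge" assume d: "fst d \<in> E'"
  let ?O = "{d'. fst d' \<in> E' \<and> dt d' = dh d}"
  have "dh d \<in> V'" using dh_in[OF d assms(2)] .
  then have "2 \<le> card ?O" using assms(3) degree_out[OF assms(1)] by simp
  have "\<not> ?O \<subseteq> {dinv d}"
  proof
    assume "?O \<subseteq> {dinv d}"
    then have "card ?O \<le> card {dinv d}" by (intro card_mono) auto
    then show False using \<open>2 \<le> card ?O\<close> by simp
  qed
  then show "\<exists>d'. fst d' \<in> E' \<and> dt d' = dh d \<and> d' \<noteq> dinv d" by blast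
qed

lemma find_d0:
  assumes "scyc E' C" "e \<in> E'" "e \<notin> EC C" "connected_graph V' E' tG hG"
    "\<forall>e\<in>E'. tG e \<in> V' \<and> hG e \<in> V'"
  shows "\<exists>d0. fst d0 \<in> E' \<and> fst d0 \<notin> EC C \<and> dt d0 \<in> VC C"
proof -
  have ex: "\<exists>d0. fst d0 \<in> E' \<and> fst d0 \<notin> EC C \<and> dt d0 \<in> VC C"
    if "g \<in> E'" "g \<notin> EC C" "tG g \<in> VC C \<or> hG g \<in> VC C" for g
    using that
    by (metis dtail_def fst_conv snd_conv)
  show ?thesis
  proof (cases "tG e \<in> VC C \<or> hG e \<in> VC C")
    case True then show ?thesis using ex assms(2,3) by blast
  next
    case False
    have ne: "C \<noteq> []" using scyc_basic(1)[OF assms(1)] .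
    have r: "dt (hd C) \<in> VC C" using ne by (simp add: VC_def)
    have "fst (hd C) \<in> E'" using scyc_basic(6)[OF assms(1)] ne by auto
    then have "dt (hd C) \<in> V'" using dt_in[of "hd C" E' V'] assms(5) by blast
    then have "reach E' (dt (hd C)) (tG e)" using conn_reach[OF assms(4)] assms(2,5) by blast
    then obtain g where g: "g \<in> E'" "(tG g \<in> VC C \<and> hG g \<notin> VC C) \<or> (hG g \<in> VC C \<and> tG g \<notin> VC C)"
      using exit_edge[OF _ r] False by blast
    then have "g \<notin> EC C" using scyc_edge_ends[OF assms(1)] by blast
    then show ?thesis using ex g by blast
  qed
qed

lemma structure_cel:
  assumes cel: "(V', E') \<in> cel_subgraphs V E tG hG"
  shows "(\<exists>C Q. ear E' C Q \<and> eE C Q = E' \<and> eV C Q = V') \<or>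
         (\<exists>C P D. bconf E' C P D \<and> bE C P D = E' \<and> bV C P D = V')"
proof -
  note cf = cel_facts[OF cel]
  have sc: "succp E'" using succp_deg[OF cf(2,5,8)] .
  have "E' \<noteq> {}" using cf(7) by auto
  then obtain C where C: "scyc E' C" using cyc_exists[OF cf(2) sc] by blast
  have ECs: "EC C \<subseteq> E'" using scyc_basic(6)[OF C] .
  have VCs: "VC C \<subseteq> V'"
    using dt_in[of _ E' V'] cf(5) ECs by (auto simp: VC_def)
  have "\<exists>e. e \<in> E' \<and> e \<notin> EC C"
  proof (rule ccontr)
    assume "\<not> (\<exists>e. e \<in> E' \<and> e \<notin> EC C)"
    then have EE: "E' = EC C" using ECs by blast
    have "V' \<subseteq> VC C"
    proof
      fix v assume v: "v \<in> V'"
      show "v \<in> VC C"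
      proof (rule ccontr)
        assume nv: "v \<notin> VC C"
        have ne: "C \<noteq> []" using scyc_basic(1)[OF C] .
        have r: "dt (hd C) \<in> VC C" using ne by (simp add: VC_def)
        have "reach E' (dt (hd C)) v" using conn_reach[OF cf(6)] VCs r v by blast
        then obtain g where "g \<in> E'" "(tG g \<in> VC C \<and> hG g \<notin> VC C) \<or> (hG g \<in> VC C \<and> tG g \<notin> VC C)"
          using exit_edge[OF _ r nv] by blast
        then show False using EE scyc_edge_ends[OF C] by blast
      qed
    qed
    then have "V' = VC C" using VCs by blast
    then have "card V' = card E'" using EE scyc_basic(8,9)[OF C] by simp
    then show False using cf(7) by simp
  qed
  then obtain e where e: "e \<in> E'" "e \<notin> EC C" by blast
  obtain d0 where d0: "fst d0 \<in> E'" "fst d0 \<notin> EC C" "dt d0 \<in> VC C"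
    using find_d0[OF C e cf(6,5)] by blast
  from grow_cycle[OF cf(2) sc C d0] show ?thesis
  proof
    assume "\<exists>Q. ear E' C Q"
    then obtain Q where Q: "ear E' C Q" by blast
    note ep = ear_props[OF Q]
    have "eV C Q \<subseteq> V'"
    proof -
      have "dt ` set Q \<subseteq> V'" using dt_in[of _ E' V'] cf(5) ear_basic(5)[OF Q] by auto
      then show ?thesis using VCs by (auto simp: eV_def)
    qed
    moreover have "int (card (eV C Q)) - int (card (eE C Q)) = -1"
    proof -
      have "card (eV C Q) + 1 = card (eE C Q)" using ep(4,5,10) by (cases Q) auto
      then show ?thesis by linarith
    qed
    ultimately have "eV C Q = V' \<and> eE C Q = E'"
      using sat[OF cf(1,2) _ ep(3) _ cf(5,6,8)] ep(6) cf(7) by blast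
    then show ?thesis using Q by blast
  next
    assume "\<exists>P D. bconf E' C P D"
    then obtain P D where B: "bconf E' C P D" by blast
    note bp = bconf_props[OF B]
    have "bV C P D \<subseteq> V'"
    proof -
      have "dt ` set P \<subseteq> V'" using dt_in[of _ E' V'] cf(5) bconf_basic(7)[OF B] by auto
      moreover have "VC D \<subseteq> V'"
        using dt_in[of _ E' V'] cf(5) scyc_basic(6)[of E' D] B by (auto simp: VC_def bconf_def)
      ultimately show ?thesis using VCs by (auto simp: bV_def)
    qed
    moreover have "int (card (bV C P D)) - int (card (bE C P D)) = -1"
    proof -
      have "card (bV C P D) + 1 = card (bE C P D)" using bp(4,5) bconf_basic(1)[OF B] by (cases P) auto
      then show ?thesis by linarith
    qed
    ultimately have "bV C P D = V' \<and> bE C P D = E'"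
      using sat[OF cf(1,2) _ bp(3) _ cf(5,6,8)] bp(6) cf(7) by blast
    then show ?thesis using B by blast
  qed
qed

end

context gr
begin

lemma is_cycle_props:
  "is_cycle S tG hG c \<Longrightarrow> walk S c \<and> closedw c \<and> nb c \<and> distinct (map fst c)"
  by (simp add: is_cycle_def walk_eq closed_eq nb_eq closedw_def is_closed_def)

lemma is_path_props:
  "is_path S tG hG p \<Longrightarrow> walk S p \<and> nb p \<and> distinct (map fst p) \<and> dt (hd p) \<noteq> dh (last p)"
  by (simp add: is_path_def walk_eq nb_eq)

lemma dfst: "x \<in> set X \<Longrightarrow> y \<in> set Y \<Longrightarrow> EC X \<inter> EC Y = {} \<Longrightarrow> fst x \<noteq> fst y"
  by blast

lemma barbell_walk:
  assumes "barbell_decomp V0 E0 tG hG w1 w2 b"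
  shows "\<exists>W. abelian_walk E0 tG hG W \<and> length W = 2 * length w1 + 2 * length w2 + 4 * length b"
proof -
  have c1: "walk E0 w1" "closedw w1" "nb w1" and c2: "walk E0 w2" "closedw w2" "nb w2"
    and pb: "walk E0 b" "nb b"
    and d12: "EC w1 \<inter> EC w2 = {}" and d1b: "EC w1 \<inter> EC b = {}" and d2b: "EC w2 \<inter> EC b = {}"
    and x: "dt (hd b) = dt (hd w1)" and y: "dh (last b) = dt (hd w2)"
    using assms is_cycle_props[of E0 w1] is_cycle_props[of E0 w2] is_path_props[of E0 b]
    by (auto simp: barbell_decomp_def walk_edges_def)
  have ne: "w1 \<noteq> []" "w2 \<noteq> []" "b \<noteq> []" using c1 c2 pb by (auto simp: walk_def)
  have s: "seg E0 w1" "seg E0 w2" "seg E0 b" "seg E0 (rw w1)" "seg E0 (rw w2)" "seg E0 (rw b)"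
    using c1 c2 pb by (simp_all add: seg_def)
  note r = rw_ends[OF ne(1)] rw_ends[OF ne(2)] rw_ends[OF ne(3)]
  have cl: "dh (last w1) = dt (hd w1)" "dh (last w2) = dt (hd w2)" using c1 c2 by (simp_all add: closedw_def)
  have f: "fst (hd w1) \<noteq> fst (hd b)" "fst (last w1) \<noteq> fst (hd b)" "fst (hd b) \<noteq> fst (last w1)"
    "fst (last b) \<noteq> fst (hd w2)" "fst (last w2) \<noteq> fst (last b)" "fst (hd b) \<noteq> fst (hd w1)"
    "fst (last b) \<noteq> fst (last w2)" "fst (hd w2) \<noteq> fst (last b)"
  proof -
    have m: "hd w1 \<in> set w1" "last w1 \<in> set w1" "hd w2 \<in> set w2" "last w2 \<in> set w2"
      "hd b \<in> set b" "last b \<in> set b" using ne by simp_all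
    have a1: "fst (hd w1) \<noteq> fst (hd b)" using dfst[OF m(1) m(5) d1b] .
    have a2: "fst (last w1) \<noteq> fst (hd b)" using dfst[OF m(2) m(5) d1b] .
    have a3: "fst (hd w2) \<noteq> fst (last b)" using dfst[OF m(3) m(6) d2b] .
    have a4: "fst (last w2) \<noteq> fst (last b)" using dfst[OF m(4) m(6) d2b] .
    show "fst (hd w1) \<noteq> fst (hd b)" "fst (last w1) \<noteq> fst (hd b)" "fst (hd b) \<noteq> fst (last w1)"
      "fst (last b) \<noteq> fst (hd w2)" "fst (last w2) \<noteq> fst (last b)" "fst (hd b) \<noteq> fst (hd w1)"
      "fst (last b) \<noteq> fst (last w2)" "fst (hd w2) \<noteq> fst (last b)"
      using a1 a2 a3 a4 by (auto dest: not_sym)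
  qed
  define W where "W = w1 @ b @ w2 @ rw b @ rw w1 @ b @ rw w2 @ rw b"
  have j7: "dh (last (rw w2)) = dt (hd (rw b))" "fst (last (rw w2)) \<noteq> fst (hd (rw b))"
    using r y f by simp_all
  note k7 = seg_cat[OF s(5) s(6) j7]
  have j6: "dh (last b) = dt (hd (rw w2 @ rw b))" "fst (last b) \<noteq> fst (hd (rw w2 @ rw b))"
    using r k7 y cl f by simp_all
  note k6 = seg_cat[OF s(3) k7(1) j6]
  have j5: "dh (last (rw w1)) = dt (hd (b @ rw w2 @ rw b))" "fst (last (rw w1)) \<noteq> fst (hd (b @ rw w2 @ rw b))"
    using r k6 x f by simp_all
  note k5 = seg_cat[OF s(4) k6(1) j5]
  have j4: "dh (last (rw b)) = dt (hd (rw w1 @ b @ rw w2 @ rw b))"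
    "fst (last (rw b)) \<noteq> fst (hd (rw w1 @ b @ rw w2 @ rw b))"
    using r k5 x cl f by simp_all
  note k4 = seg_cat[OF s(6) k5(1) j4]
  have j3: "dh (last w2) = dt (hd (rw b @ rw w1 @ b @ rw w2 @ rw b))"
    "fst (last w2) \<noteq> fst (hd (rw b @ rw w1 @ b @ rw w2 @ rw b))"
    using r k4 y cl f by simp_all
  note k3 = seg_cat[OF s(2) k4(1) j3]
  have j2: "dh (last b) = dt (hd (w2 @ rw b @ rw w1 @ b @ rw w2 @ rw b))"
    "fst (last b) \<noteq> fst (hd (w2 @ rw b @ rw w1 @ b @ rw w2 @ rw b))"
    using r k3 y f by simp_all
  note k2 = seg_cat[OF s(3) k3(1) j2]
  have j1: "dh (last w1) = dt (hd (b @ w2 @ rw b @ rw w1 @ b @ rw w2 @ rw b))"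
    "fst (last w1) \<noteq> fst (hd (b @ w2 @ rw b @ rw w1 @ b @ rw w2 @ rw b))"
    using r k2 x cl f by simp_all
  note k1 = seg_cat[OF s(1) k2(1) j1]
  have sW: "seg E0 W" "dt (hd W) = dt (hd w1)" "dh (last W) = dh (last (rw b))"
    unfolding W_def using k1 k2 k3 k4 k5 k6 k7 by simp_all
  have clW: "closedw W" unfolding closedw_def using sW r x by simp
  have cnt: "\<And>d. count_list W d = count_list W (dinv d)"
    unfolding W_def count_list_append count_rw dinv_simps(1) by linarith
  have "abelian_walk E0 tG hG W"
    using sW(1) clW sym_balanced[of W, OF cnt] by (intro abelian_intro) (simp_all add: seg_def)
  moreover have "length W = 2 * length w1 + 2 * length w2 + 4 * length b" by (simp add: W_def)
  ultimately show ?thesis by blast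
qed

lemma lAbl_barbell:
  assumes "barbell_decomp V0 E0 tG hG w1 w2 b"
  shows "(\<Sum>e\<in>E0. if e \<in> walk_edges b then 4 else 2) = 2 * length w1 + 2 * length w2 + (4::nat) * length b"
proof -
  have d: "distinct (map fst w1)" "distinct (map fst w2)" "distinct (map fst b)"
    and d12: "EC w1 \<inter> EC w2 = {}" and d1b: "EC w1 \<inter> EC b = {}" and d2b: "EC w2 \<inter> EC b = {}"
    and E: "E0 = EC w1 \<union> EC w2 \<union> EC b"
    using assms is_cycle_props[of E0 w1] is_cycle_props[of E0 w2] is_path_props[of E0 b]
    by (auto simp: barbell_decomp_def walk_edges_def)
  have cards: "card (EC w1) = length w1" "card (EC w2) = length w2" "card (EC b) = length b"
    using distinct_card[OF d(1)] distinct_card[OF d(2)] distinct_card[OF d(3)] by simp_all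
  let ?f = "\<lambda>e. if e \<in> walk_edges b then 4 else (2::nat)"
  have "sum ?f E0 = sum ?f (EC w1 \<union> EC w2) + sum ?f (EC b)"
    unfolding E using d12 d1b d2b by (subst sum.union_disjoint) auto
  also have "sum ?f (EC w1 \<union> EC w2) = sum ?f (EC w1) + sum ?f (EC w2)"
    using d12 by (subst sum.union_disjoint) auto
  also have "sum ?f (EC w1) = 2 * length w1"
  proof -
    have "sum ?f (EC w1) = sum (\<lambda>_. 2) (EC w1)"
      using d1b by (intro sum.cong refl) (auto simp: walk_edges_def)
    then show ?thesis using cards(1) by simp
  qed
  also have "sum ?f (EC w2) = 2 * length w2"
  proof -
    have "sum ?f (EC w2) = sum (\<lambda>_. 2) (EC w2)"
      using d2b by (intro sum.cong refl) (auto simp: walk_edges_def)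
    then show ?thesis using cards(2) by simp
  qed
  also have "sum ?f (EC b) = 4 * length b"
  proof -
    have "sum ?f (EC b) = sum (\<lambda>_. 4) (EC b)"
      by (intro sum.cong refl) (auto simp: walk_edges_def)
    then show ?thesis using cards(3) by simp
  qed
  finally show ?thesis .
qed


lemma Abl_le: "abelian_walk E tG hG W \<Longrightarrow> Abl E tG hG \<le> enat (length W)"
  unfolding Abl_def by (rule Inf_lower) blast

lemma partA:
  assumes cel: "(V', E') \<in> cel_subgraphs V E tG hG"
  shows "Abl E tG hG \<le> enat (l_Abl V' E' tG hG)"
proof (cases "is_barbell V' E' tG hG")
  case True
  define b0 where "b0 = (SOME b. \<exists>w1 w2. barbell_decomp V' E' tG hG w1 w2 b)"
  have "\<exists>b w1 w2. barbell_decomp V' E' tG hG w1 w2 b" using True by (auto simp: is_barbell_def)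
  then have "\<exists>w1 w2. barbell_decomp V' E' tG hG w1 w2 b0"
    unfolding b0_def by (metis (mono_tags, lifting) someI_ex)
  then obtain w1 w2 where dec: "barbell_decomp V' E' tG hG w1 w2 b0" by blast
  have bar: "bar_edges V' E' tG hG = walk_edges b0" using True by (simp add: bar_edges_def b0_def)
  obtain W where W: "abelian_walk E' tG hG W" "length W = 2 * length w1 + 2 * length w2 + 4 * length b0"
    using barbell_walk[OF dec] by blast
  have "l_Abl V' E' tG hG = length W"
    using lAbl_barbell[OF dec] W(2) bar by (simp add: l_Abl_def)
  moreover have "abelian_walk E tG hG W" using abelian_mono[OF W(1)] cel_facts(4)[OF cel] .
  ultimately show ?thesis using Abl_le[of E W] by simp
next
  case False
  have bar: "bar_edges V' E' tG hG = {}" using False by (simp add: bar_edges_def)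
  from structure_cel[OF cel] show ?thesis
  proof
    assume "\<exists>C Q. ear E' C Q \<and> eE C Q = E' \<and> eV C Q = V'"
    then obtain C Q where CQ: "ear E' C Q" "eE C Q = E'" by blast
    obtain W where W: "abelian_walk E' tG hG W" "length W = 2 * card E'"
      using theta_walk[OF CQ(1)] CQ(2) by auto
    have "l_Abl V' E' tG hG = 2 * card E'" using bar by (simp add: l_Abl_def)
    moreover have "abelian_walk E tG hG W" using abelian_mono[OF W(1)] cel_facts(4)[OF cel] .
    ultimately show ?thesis using Abl_le[of E W] W(2) by simp
  next
    assume "\<exists>C P D. bconf E' C P D \<and> bE C P D = E' \<and> bV C P D = V'"
    then obtain C P D where "bconf E' C P D" "bE C P D = E'" "bV C P D = V'" by blast
    then have "is_barbell V' E' tG hG" using bconf_barbell by metis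
    then show ?thesis using False by simp
  qed
qed

end

context gr
begin

definition vseq :: "'e dedge list \<Rightarrow> 'v list" where
  "vseq p = map dt p @ [dh (last p)]"

lemma vseq_len: "length (vseq p) = Suc (length p)" by (simp add: vseq_def)
lemma vseq_nth: "i < length p \<Longrightarrow> vseq p ! i = dt (p ! i)"
  by (simp add: vseq_def nth_append)
lemma vseq_last: "vseq p ! length p = dh (last p)"
  by (simp add: vseq_def nth_append)
lemma vseq_dh: "chain p \<Longrightarrow> i < length p \<Longrightarrow> dh (p ! i) = vseq p ! Suc i"
proof -
  assume a: "chain p" "i < length p"
  show ?thesis
  proof (cases "Suc i < length p")
    case True then show ?thesis using chain_dh_nth[OF a] vseq_nth[of "Suc i" p] by simp
  next
    case False
    then have "Suc i = length p" using a by simp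
    then show ?thesis using chain_dh_nth[OF a] vseq_last[of p] by simp
  qed
qed
lemma set_vseq: "p \<noteq> [] \<Longrightarrow> chain p \<Longrightarrow> set (vseq p) = dt ` set p \<union> dh ` set p"
proof -
  assume a: "p \<noteq> []" "chain p"
  have "dh ` set p \<subseteq> set (vseq p)"
    using dh_set_sub[OF a(2)] by (auto simp: vseq_def dest: list.set_sel(2)[OF a(1)])
  moreover have "dh (last p) \<in> dh ` set p" using a(1) by simp
  ultimately show ?thesis by (auto simp: vseq_def)
qed

lemma closed_edge_ends:
  assumes "chain c" "closedw c" "c \<noteq> []" "e \<in> EC c"
  shows "tG e \<in> dt ` set c" "hG e \<in> dt ` set c"
proof -
  obtain d where d: "d \<in> set c" "fst d = e" using assms(4) by auto
  have "dt d \<in> dt ` set c" "dh d \<in> dt ` set c" using d closed_heads[OF assms(1-3)] by auto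
  moreover have "tG e \<in> {dt d, dh d}" "hG e \<in> {dt d, dh d}" using ends_d[of d] d by auto
  ultimately show "tG e \<in> dt ` set c" "hG e \<in> dt ` set c" by auto
qed

lemma no_reach_out:
  assumes "reach S a c" "a \<in> A" "\<forall>e\<in>S. (tG e \<in> A \<longleftrightarrow> hG e \<in> A)"
  shows "c \<in> A"
  using exit_edge[OF assms(1,2)] assms(3) by blast

lemma bar_bridge:
  assumes fin: "finite V0" "finite E0" and chi: "int (card V0) - int (card E0) = -1"
    and dec: "barbell_decomp V0 E0 tG hG w1 w2 b" and f: "f \<in> walk_edges b"
  shows "\<not> reach (E0 - {f}) (tG f) (hG f)"
proof -
  have c1: "walk E0 w1" "closedw w1" "nb w1" "distinct (map fst w1)"
    and c2: "walk E0 w2" "closedw w2" "nb w2" "distinct (map fst w2)"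
    and pb: "walk E0 b" "nb b" "distinct (map fst b)" "dt (hd b) \<noteq> dh (last b)"
    and d12: "EC w1 \<inter> EC w2 = {}" and d1b: "EC w1 \<inter> EC b = {}" and d2b: "EC w2 \<inter> EC b = {}"
    and x: "dt (hd b) = dt (hd w1)" and y: "dh (last b) = dt (hd w2)"
    and E: "E0 = EC w1 \<union> EC w2 \<union> EC b"
    and V: "V0 = walk_vertices tG hG w1 \<union> walk_vertices tG hG w2 \<union> walk_vertices tG hG b"
    using dec is_cycle_props[of E0 w1] is_cycle_props[of E0 w2] is_path_props[of E0 b]
    by (auto simp: barbell_decomp_def walk_edges_def)
  have ne: "w1 \<noteq> []" "w2 \<noteq> []" "b \<noteq> []" using c1 c2 pb by (auto simp: walk_def)
  have ch: "chain w1" "chain w2" "chain b" using c1 c2 pb by (auto simp: walk_def)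
  define V1 where "V1 = dt ` set w1"
  define V2 where "V2 = dt ` set w2"
  define Vb where "Vb = set (vseq b)"
  have wv1: "walk_vertices tG hG w1 = V1" using closed_heads[OF ch(1) c1(2) ne(1)]
    by (auto simp: walk_vertices_def V1_def)
  have wv2: "walk_vertices tG hG w2 = V2" using closed_heads[OF ch(2) c2(2) ne(2)]
    by (auto simp: walk_vertices_def V2_def)
  have wvb: "walk_vertices tG hG b = Vb" using set_vseq[OF ne(3) ch(3)]
    by (simp add: walk_vertices_def Vb_def)
  have V0: "V0 = V1 \<union> V2 \<union> Vb" using V wv1 wv2 wvb by simp
  have k1: "card V1 \<le> length w1" unfolding V1_def by (metis card_image_le card_length finite_set le_trans length_map set_map)
  have k2: "card V2 \<le> length w2" unfolding V2_def by (metis card_image_le card_length finite_set le_trans length_map set_map)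
  have kb: "card Vb \<le> Suc (length b)" unfolding Vb_def using card_length[of "vseq b"] vseq_len[of b] by simp
  have cE: "card E0 = length w1 + length w2 + length b"
  proof -
    have "card (EC w1 \<union> EC w2) = length w1 + length w2"
      using d12 distinct_card[OF c1(4)] distinct_card[OF c2(4)] by (subst card_Un_disjoint) auto
    then show ?thesis unfolding E using d1b d2b distinct_card[OF pb(3)]
      by (subst card_Un_disjoint) auto
  qed
  have fV: "finite V1" "finite V2" "finite Vb" by (simp_all add: V1_def V2_def Vb_def)
  have xin: "dt (hd b) \<in> V1" "dt (hd b) \<in> Vb"
    using x ne(1) apply (simp add: V1_def)
    using ne(3) by (simp add: Vb_def vseq_def)
  have yin: "dh (last b) \<in> V2" "dh (last b) \<in> Vb"
    using y ne(2) apply (simp add: V2_def)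
    by (simp add: Vb_def vseq_def)
  let ?U = "V1 \<union> V2"
  have u1: "card ?U + card (V1 \<inter> V2) = card V1 + card V2" using card_Un_Int[OF fV(1,2)] by simp
  have u2: "card (?U \<union> Vb) + card (?U \<inter> Vb) = card ?U + card Vb"
    using card_Un_Int[of ?U Vb] fV by simp
  have xy: "{dt (hd b), dh (last b)} \<subseteq> ?U \<inter> Vb" using xin yin by auto
  have c2': "2 \<le> card (?U \<inter> Vb)"
  proof -
    have "card {dt (hd b), dh (last b)} \<le> card (?U \<inter> Vb)" using xy fV by (intro card_mono) auto
    then show ?thesis using pb(4) by simp
  qed
  have cV: "card V0 + 1 = card E0" using chi by linarith
  have eqs: "card (V1 \<inter> V2) = 0" "card (?U \<inter> Vb) = 2" "card Vb = Suc (length b)"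
  proof -
    have "card V0 = card (?U \<union> Vb)" using V0 by simp
    then show "card (V1 \<inter> V2) = 0" "card (?U \<inter> Vb) = 2" "card Vb = Suc (length b)"
      using u1 u2 c2' cV cE k1 k2 kb by linarith+
  qed
  have V12: "V1 \<inter> V2 = {}" using eqs(1) fV by simp
  have UVb: "?U \<inter> Vb = {dt (hd b), dh (last b)}"
  proof -
    have "finite (?U \<inter> Vb)" using fV by simp
    then show ?thesis using xy eqs(2) pb(4) by (metis card_2_iff card_subset_eq finite_insert)
  qed
  have dv: "distinct (vseq b)" using eqs(3) vseq_len[of b] card_distinct[of "vseq b"] by (simp add: Vb_def)
  have Vb1: "Vb \<inter> V1 \<subseteq> {dt (hd b)}" using UVb V12 yin by blast
  have Vb2: "Vb \<inter> V2 \<subseteq> {dh (last b)}" using UVb V12 xin by blast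
  have v0: "vseq b ! 0 = dt (hd b)" using ne(3) by (simp add: vseq_nth hd_conv_nth)
  have vl: "vseq b ! length b = dh (last b)" by (rule vseq_last)
  obtain k where k: "k < length b" "fst (b ! k) = f" using f by (auto simp: walk_edges_def in_set_conv_nth)
  define S where "S = V1 \<union> {vseq b ! i | i. i \<le> k}"
  have vinj: "\<And>i j. i \<le> length b \<Longrightarrow> j \<le> length b \<Longrightarrow> vseq b ! i = vseq b ! j \<Longrightarrow> i = j"
    using dv vseq_len[of b] by (metis less_Suc_eq_le nth_eq_iff_index_eq)
  have vin: "\<And>i. i \<le> length b \<Longrightarrow> vseq b ! i \<in> Vb"
    using vseq_len[of b] by (simp add: Vb_def)
  have notS: "vseq b ! j \<notin> S" if "k < j" "j \<le> length b" for j
  proof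
    assume "vseq b ! j \<in> S"
    then consider "vseq b ! j \<in> V1" | i where "i \<le> k" "vseq b ! j = vseq b ! i"
      unfolding S_def by blast
    then show False
    proof cases
      case 1
      then have "vseq b ! j = vseq b ! 0" using Vb1 vin[OF that(2)] v0 by auto
      then show False using vinj[OF that(2), of 0] that by simp
    next
      case 2 then show False using vinj[OF that(2), of i] that k by simp
    qed
  qed
  have V2S: "V2 \<inter> S = {}"
  proof -
    have "v \<notin> S" if "v \<in> V2" for v
    proof
      assume "v \<in> S"
      then consider "v \<in> V1" | i where "i \<le> k" "v = vseq b ! i" unfolding S_def by blast
      then show False
      proof cases
        case 1 then show False using V12 that by blast
      next
        case 2
        then have "v = vseq b ! length b" using Vb2 vin[of i] that vl k by auto
        then show False using vinj[of i "length b"] 2 k by simp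
      qed
    qed
    then show ?thesis by blast
  qed
  have tS: "dt (b ! k) \<in> S"
  proof -
    have "vseq b ! k \<in> {vseq b ! i | i. i \<le> k}" by blast
    then show ?thesis using vseq_nth[OF k(1)] unfolding S_def by simp
  qed
  have hS: "dh (b ! k) \<notin> S" using vseq_dh[OF ch(3) k(1)] notS[of "Suc k"] k by simp
  have inv: "\<forall>e\<in>E0 - {f}. (tG e \<in> S \<longleftrightarrow> hG e \<in> S)"
  proof
    fix e assume e: "e \<in> E0 - {f}"
    then consider "e \<in> EC w1" | "e \<in> EC w2" | "e \<in> EC b" using E by blast
    then show "tG e \<in> S \<longleftrightarrow> hG e \<in> S"
    proof cases
      case 1
      then have "tG e \<in> V1" "hG e \<in> V1" using closed_edge_ends[OF ch(1) c1(2) ne(1)] V1_def by auto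
      then show ?thesis by (auto simp: S_def)
    next
      case 2
      then have "tG e \<in> V2" "hG e \<in> V2" using closed_edge_ends[OF ch(2) c2(2) ne(2)] V2_def by auto
      then show ?thesis using V2S by blast
    next
      case 3
      then obtain j where j: "j < length b" "fst (b ! j) = e" by (auto simp: in_set_conv_nth)
      have "j \<noteq> k" using e j k by auto
      have ends: "{tG e, hG e} = {vseq b ! j, vseq b ! Suc j}"
        using ends_d[of "b ! j"] j vseq_nth[OF j(1)] vseq_dh[OF ch(3) j(1)] by simp
      show ?thesis
      proof (cases "j < k")
        case True
        then have "vseq b ! j \<in> S" "vseq b ! Suc j \<in> S" unfolding S_def by auto
        then show ?thesis using ends by (metis doubleton_eq_iff insert_iff)
      next
        case False
        then have "k < j" using \<open>j \<noteq> k\<close> by simp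
        then have "vseq b ! j \<notin> S" "vseq b ! Suc j \<notin> S" using notS j by auto
        then show ?thesis using ends by (metis doubleton_eq_iff insert_iff)
      qed
    qed
  qed
  show ?thesis
  proof
    assume r: "reach (E0 - {f}) (tG f) (hG f)"
    have tf: "{tG f, hG f} = {dt (b ! k), dh (b ! k)}" using ends_d[of "b ! k"] k by simp
    then consider "tG f = dt (b ! k)" "hG f = dh (b ! k)" | "tG f = dh (b ! k)" "hG f = dt (b ! k)"
      by (metis doubleton_eq_iff)
    then show False
    proof cases
      case 1 then show False using no_reach_out[OF r _ inv] tS hS by simp
    next
      case 2 then show False using no_reach_out[OF reach_sym[OF r] _ inv] tS hS by simp
    qed
  qed
qed

end

context gr
begin

lemma abelian_iff: "abelian_walk E tG hG w \<longleftrightarrow> walk E w \<and> closedw w \<and> nb w \<and> balanced w"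
  by (auto simp: abelian_walk_def walk_eq closed_eq nb_eq closedw_def is_closed_def)

definition minab :: "'e set \<Rightarrow> 'e dedge list \<Rightarrow> bool" where
  "minab E w \<longleftrightarrow> abelian_walk E tG hG w \<and> (\<forall>w'. abelian_walk E tG hG w' \<longrightarrow> length w \<le> length w')"

lemma dinv_TF: "dinv (e, True) = (e, False)" "dinv (e, False) = (e, True)"
  by (simp_all add: dinv_def)

lemma balanced_dinv: "balanced w \<Longrightarrow> count_list w (dinv d) = count_list w d"
  unfolding balanced_def by (cases d, rename_tac e b, case_tac b) (auto simp: dinv_TF)

lemma bal_both: "balanced w \<Longrightarrow> d \<in> set w \<Longrightarrow> dinv d \<in> set w"
  using balanced_dinv[of w d] by (metis count_list_0_iff)

lemma bal_edge: "balanced w \<Longrightarrow> fst d \<in> EC w \<Longrightarrow> d \<in> set w"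
proof -
  assume b: "balanced w" "fst d \<in> EC w"
  then obtain d' where d': "d' \<in> set w" "fst d' = fst d" by auto
  from same_fst[OF d'(2)] show ?thesis
  proof
    assume "d' = dinv d" then show ?thesis using bal_both[OF b(1), of d'] d' by simp
  qed (use d' in simp)
qed

lemma cnt_ge2:
  assumes "balanced w" "e \<in> EC w"
  shows "2 \<le> cnt w e"
proof -
  have "(e, True) \<in> set w" using bal_edge[OF assms(1), of "(e, True)"] assms(2) by simp
  then have "count_list w (e, True) \<noteq> 0" by (simp add: count_list_0_iff)
  moreover have "count_list w (e, True) = count_list w (e, False)"
    using assms(1) by (simp add: balanced_def)
  ultimately show ?thesis by (simp add: cnt_def)
qed

lemma bal_inner:
  assumes "balanced (a # u @ [dinv a])"
  shows "balanced u"
  unfolding balanced_def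
proof
  fix e
  have "count_list (a # u @ [dinv a]) (e, True) = count_list (a # u @ [dinv a]) (e, False)"
    using assms by (simp add: balanced_def)
  moreover have "a = (e, True) \<longleftrightarrow> dinv a = (e, False)" "a = (e, False) \<longleftrightarrow> dinv a = (e, True)"
    by (metis dinv_TF dinv_simps(1))+
  ultimately show "count_list u (e, True) = count_list u (e, False)"
    by (auto split: if_splits)
qed

lemma minab_cnb:
  assumes "minab E w"
  shows "last w \<noteq> dinv (hd w)"
proof
  assume eq: "last w = dinv (hd w)"
  have a: "walk E w" "closedw w" "nb w" "balanced w" using assms by (auto simp: minab_def abelian_iff)
  have ne: "w \<noteq> []" using a(1) by (simp add: walk_def)
  obtain x u where xu: "w = x # u" using ne by (cases w) auto
  have "u \<noteq> []" using eq xu by auto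
  then obtain v where uv: "u = v @ [last u]" by (metis append_butlast_last_id)
  have lu: "last u = dinv x" using eq xu \<open>u \<noteq> []\<close> by simp
  have w: "w = x # v @ [dinv x]" using xu uv lu by simp
  have "v \<noteq> []"
  proof
    assume "v = []"
    then have "nb [x, dinv x]" using a(3) w by simp
    then show False by simp
  qed
  have ch: "chain w" using a(1) by (simp add: walk_def)
  have c1: "chain ((x # v) @ [dinv x])" using ch w by simp
  have c2: "chain (x # (v @ [dinv x]))" using ch w by simp
  have chv: "chain (x # v)" "chain (v @ [dinv x])"
    using chain_append[of "x # v" "[dinv x]"] c1 chain_Cons[of x "v @ [dinv x]"] c2 by auto
  have "abelian_walk E tG hG v"
    unfolding abelian_iff
  proof (intro conjI)
    show "walk E v" using a(1) w \<open>v \<noteq> []\<close> chv by (auto simp: walk_def chain_append chain_Cons)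
    show "closedw v" using chv \<open>v \<noteq> []\<close> by (simp add: closedw_def chain_append chain_Cons)
    show "nb v" using a(3) w by (simp add: nb_append nb_Cons)
    show "balanced v" using bal_inner a(4) w by simp
  qed
  then have "length w \<le> length v" using assms by (simp add: minab_def)
  then show False using w by simp
qed

lemma minab_rot:
  assumes "minab E w" "k < length w"
  shows "minab E (rot k w)"
proof -
  have a: "walk E w" "closedw w" "nb w" "balanced w" using assms by (auto simp: minab_def abelian_iff)
  have ch: "chain w" using a(1) by (simp add: walk_def)
  have c: "cnb w" using a(3) minab_cnb[OF assms(1)] by (simp add: cnb_def)
  have "walk E (rot k w)" using a(1) rot_chain(1)[OF ch a(2) assms(2)] rot_simps(1,2)[of k w]
    by (auto simp: walk_def)
  moreover have "closedw (rot k w)" using rot_chain(2)[OF ch a(2) assms(2)] .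
  moreover have "nb (rot k w)" using rot_cnb[OF c assms(2)] by (simp add: cnb_def)
  moreover have "balanced (rot k w)" using a(4) by (simp add: balanced_def rot_simps)
  ultimately show ?thesis using assms(1) rot_simps(1)[of k w]
    by (simp add: minab_def abelian_iff)
qed

lemma minab_succ:
  assumes "minab E w" "d \<in> set w"
  shows "\<exists>d'\<in>set w. dt d' = dh d \<and> d' \<noteq> dinv d"
proof -
  have a: "walk E w" "closedw w" "nb w" using assms by (auto simp: minab_def abelian_iff)
  have ch: "chain w" using a(1) by (simp add: walk_def)
  obtain i where i: "i < length w" "w ! i = d" using assms(2) by (meson in_set_conv_nth)
  show ?thesis
  proof (cases "Suc i < length w")
    case True
    then show ?thesis using chain_nth[OF ch True] nb_nth[OF a(3) True] i
      by (metis nth_mem)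
  next
    case False
    then have "i = length w - 1" using i by simp
    then have "d = last w" using i by (metis last_conv_nth list.size(3) not_less_zero)
    moreover have "hd w \<in> set w" using i by (cases w) auto
    moreover have "hd w \<noteq> dinv (last w)" using minab_cnb[OF assms(1)] by (metis dinv_simps(1))
    ultimately show ?thesis using a(2) by (metis closedw_def)
  qed
qed

lemma minab_succp:
  assumes "minab E w"
  shows "succp (EC w)"
  unfolding succp_def
proof (intro allI impI)
  fix d :: "'e dedge" assume "fst d \<in> EC w"
  moreover have b: "balanced w" using assms by (simp add: minab_def abelian_iff)
  ultimately have "d \<in> set w" using bal_edge by blast
  then show "\<exists>d'. fst d' \<in> EC w \<and> dt d' = dh d \<and> d' \<noteq> dinv d"
    using minab_succ[OF assms] by fastforce
qed

end

context gr
begin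

lemma scyc_dh_inj:
  assumes "scyc S C" "m < length C" "k < length C" "dh (C ! m) = dh (C ! k)"
  shows "m = k"
proof -
  have ch: "chain C" and cl: "closedw C" and ne: "C \<noteq> []" and d: "distinct (map dt C)"
    using scyc_basic[OF assms(1)] assms(1) by (auto simp: scyc_def)
  define nx where "nx i = (if Suc i < length C then Suc i else 0)" for i
  have dhn: "dh (C ! i) = dt (C ! nx i)" if "i < length C" for i
  proof (cases "Suc i < length C")
    case True then show ?thesis using chain_nth[OF ch True] by (simp add: nx_def)
  next
    case False
    then have "i = length C - 1" using that by simp
    then have "C ! i = last C" using ne by (simp add: last_conv_nth)
    then show ?thesis using cl ne False by (simp add: nx_def closedw_def hd_conv_nth)
  qed
  have nxl: "nx i < length C" if "i < length C" for i using that ne by (simp add: nx_def)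
  have "nx m = nx k" using dhn[OF assms(2)] dhn[OF assms(3)] assms(4) dist_nth[OF d nxl[OF assms(2)] nxl[OF assms(3)]]
    by simp
  then show ?thesis using assms(2,3) by (auto simp: nx_def split: if_splits)
qed

lemma cyc_step:
  assumes "scyc S C" "d \<in> set C" "fst d' \<in> EC C" "dt d' = dh d" "d' \<noteq> dinv d"
  shows "d' \<in> set C"
proof -
  obtain k where k: "k < length C" "C ! k = d" using assms(2) by (meson in_set_conv_nth)
  obtain m where m: "m < length C" "fst (C ! m) = fst d'" using assms(3) by (auto simp: in_set_conv_nth)
  from same_fst[OF m(2)] show ?thesis
  proof
    assume "C ! m = d'" then show ?thesis using nth_mem[OF m(1)] by simp
  next
    assume a: "C ! m = dinv d'"
    then have "dh (C ! m) = dh (C ! k)" using assms(4) k by simp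
    then have "m = k" using scyc_dh_inj[OF assms(1) m(1) k(1)] by simp
    then have "dinv d = d'" using a k by simp
    then show ?thesis using assms(5) by simp
  qed
qed

lemma cyc_step':
  assumes "scyc S C" "d \<in> dinv ` set C" "fst d' \<in> EC C" "dt d' = dh d" "d' \<noteq> dinv d"
  shows "d' \<in> dinv ` set C"
proof -
  obtain k where k: "k < length C" "dinv (C ! k) = d" using assms(2) by (auto simp: in_set_conv_nth)
  obtain m where m: "m < length C" "fst (C ! m) = fst d'" using assms(3) by (auto simp: in_set_conv_nth)
  have d: "distinct (map dt C)" using assms(1) by (simp add: scyc_def)
  from same_fst[OF m(2)] show ?thesis
  proof
    assume a: "C ! m = d'"
    then have "dt (C ! m) = dt (C ! k)" using assms(4) k by auto
    then have "m = k" using dist_nth[OF d m(1) k(1)] by simp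
    then show ?thesis using a k assms(5) by auto
  next
    assume "C ! m = dinv d'"
    then have "d' = dinv (C ! m)" by simp
    then show ?thesis using nth_mem[OF m(1)] by blast
  qed
qed

lemma single_cycle_unbal:
  assumes "scyc S C" "chain w" "nb w" "w \<noteq> []" "EC w \<subseteq> EC C"
  shows "\<not> balanced w"
proof
  assume bal: "balanced w"
  have dj: "set C \<inter> dinv ` set C = {}"
  proof (rule ccontr)
    assume "set C \<inter> dinv ` set C \<noteq> {}"
    then obtain x y where xy: "x \<in> set C" "y \<in> set C" "x = dinv y" by blast
    obtain i where i: "i < length C" "C ! i = x" using xy(1) by (meson in_set_conv_nth)
    obtain j where j: "j < length C" "C ! j = y" using xy(2) by (meson in_set_conv_nth)
    have ij: "i < length C" "j < length C" "C ! i = dinv (C ! j)" using i j xy(3) by auto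
    have "fst (C ! i) = fst (C ! j)" using ij(3) by simp
    then have "i = j" using dist_nth[OF scyc_basic(5)[OF assms(1)] ij(1,2)] by simp
    then show False using ij(3) by simp
  qed
  have inC: "\<And>i. i < length w \<Longrightarrow> fst (w ! i) \<in> EC C" using assms(5) by (metis image_subset_iff nth_mem)
  have all: "\<forall>i<length w. w ! i \<in> F" if F: "F = set C \<or> F = dinv ` set C" "w ! 0 \<in> F" for F
  proof (intro allI impI)
    fix i assume "i < length w"
    then show "w ! i \<in> F"
    proof (induction i)
      case 0 then show ?case using that by simp
    next
      case (Suc i)
      have p: "fst (w ! Suc i) \<in> EC C" "dt (w ! Suc i) = dh (w ! i)" "w ! Suc i \<noteq> dinv (w ! i)"
        using inC[OF Suc.prems] chain_nth[OF assms(2) Suc.prems] nb_nth[OF assms(3) Suc.prems] by auto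
      have "w ! i \<in> F" using Suc by simp
      then show ?case using F(1) cyc_step[OF assms(1) _ p] cyc_step'[OF assms(1) _ p] by blast
    qed
  qed
  have h: "w ! 0 \<in> set C \<or> w ! 0 \<in> dinv ` set C"
  proof -
    obtain m where m: "m < length C" "fst (C ! m) = fst (w ! 0)" using inC[of 0] assms(4)
      by (auto simp: in_set_conv_nth)
    from same_fst[OF m(2)] show ?thesis
    proof
      assume "C ! m = w ! 0" then show ?thesis using nth_mem[OF m(1)] by simp
    next
      assume "C ! m = dinv (w ! 0)"
      then have "w ! 0 = dinv (C ! m)" by simp
      then show ?thesis using nth_mem[OF m(1)] by blast
    qed
  qed
  have w0: "w ! 0 \<in> set w" "dinv (w ! 0) \<in> set w" using assms(4) bal_both[OF bal] by auto
  from h show False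
  proof
    assume "w ! 0 \<in> set C"
    then have "\<forall>i<length w. w ! i \<in> set C" using all by blast
    moreover obtain j where "j < length w" "w ! j = dinv (w ! 0)" using w0(2) by (meson in_set_conv_nth)
    ultimately have "dinv (w ! 0) \<in> set C" by auto
    moreover have "dinv (w ! 0) \<in> dinv ` set C" using \<open>w ! 0 \<in> set C\<close> by blast
    ultimately show False using dj by blast
  next
    assume a: "w ! 0 \<in> dinv ` set C"
    then have "\<forall>i<length w. w ! i \<in> dinv ` set C" using all by blast
    moreover obtain j where "j < length w" "w ! j = dinv (w ! 0)" using w0(2) by (meson in_set_conv_nth)
    ultimately have "dinv (w ! 0) \<in> dinv ` set C" by metis
    moreover have "dinv (w ! 0) \<in> set C" using a by auto
    ultimately show False using dj by blast
  qed
qed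


lemma walk_vert_ends:
  "d \<in> set X \<Longrightarrow> tG (fst d) \<in> dt ` set X \<union> dh ` set X"
proof -
  assume d: "d \<in> set X"
  have "tG (fst d) \<in> {dt d, dh d}" using ends_d[of d] by blast
  then show ?thesis using d by blast
qed

lemma bridge_cnt:
  assumes m: "minab E w" and e: "e \<in> EC w" and br: "\<not> reach (EC w - {e}) (tG e) (hG e)"
  shows "4 \<le> cnt w e"
proof (rule ccontr)
  assume lt: "\<not> 4 \<le> cnt w e"
  have a: "walk E w" "closedw w" "nb w" "balanced w" using m by (auto simp: minab_def abelian_iff)
  have eq: "count_list w (e, True) = count_list w (e, False)" using a(4) by (simp add: balanced_def)
  have "(e, True) \<in> set w" using bal_edge[OF a(4), of "(e, True)"] e by simp
  then have "count_list w (e, True) \<noteq> 0" by (simp add: count_list_0_iff)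
  then have c1: "count_list w (e, True) = Suc 0" "count_list w (e, False) = Suc 0"
    using lt eq by (simp_all add: cnt_def)
  obtain pre rest where pr: "w = pre @ (e, True) # rest" "count_list rest (e, True) = 0"
    using count_list_Suc_split_first[OF c1(1)] by blast
  define k where "k = length pre"
  have kl: "k < length w" using pr by (simp add: k_def)
  define w1 where "w1 = rot k w"
  have w1eq: "w1 = (e, True) # rest @ pre" using pr by (simp add: w1_def rot_def k_def)
  have m1: "minab E w1" using minab_rot[OF m kl] by (simp add: w1_def)
  have cw1: "\<And>d. count_list w1 d = count_list w d" by (simp add: w1_def rot_simps)
  have sw1: "set w1 = set w" by (simp add: w1_def rot_simps)
  have crp: "count_list (rest @ pre) (e, False) = Suc 0" "count_list (rest @ pre) (e, True) = 0"
    using cw1[of "(e, False)"] cw1[of "(e, True)"] c1 w1eq by simp_all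
  obtain X Y where XY: "rest @ pre = X @ (e, False) # Y" "(e, False) \<notin> set X" "count_list Y (e, False) = 0"
    using count_list_Suc_split_first[OF crp(1)] by blast
  have W: "w1 = (e, True) # X @ (e, False) # Y" using w1eq XY(1) by simp
  have "(e, True) \<notin> set (rest @ pre)" using crp(2) count_list_0_iff by metis
  then have nT: "(e, True) \<notin> set X" "(e, True) \<notin> set Y" using XY(1) by simp_all
  have nF: "(e, False) \<notin> set Y" using XY(3) by (simp add: count_list_0_iff)
  have neX: "e \<notin> EC X" "e \<notin> EC Y"
  proof -
    have "d \<notin> set X" "d \<notin> set Y" if "fst d = e" for d
    proof -
      have "d = (e, snd d)" using that by auto
      then obtain b where "d = (e, b)" by blast
      then show "d \<notin> set X" "d \<notin> set Y" using nT nF XY(2) by (cases b; simp)+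
    qed
    then show "e \<notin> EC X" "e \<notin> EC Y" by auto
  qed
  have a1: "walk E w1" "closedw w1" "nb w1" "balanced w1" using m1 by (auto simp: minab_def abelian_iff)
  have cn1: "last w1 \<noteq> dinv (hd w1)" using minab_cnb[OF m1] .
  have XN: "X \<noteq> []"
  proof
    assume "X = []"
    then have "nb ((e, True) # (e, False) # Y)" using a1(3) W by simp
    then show False by (simp add: dinv_TF)
  qed
  have YN: "Y \<noteq> []"
  proof
    assume "Y = []"
    then show False using cn1 W by (simp add: dinv_TF)
  qed
  have ch1: "chain w1" using a1(1) by (simp add: walk_def)
  have chW: "chain ((e, True) # (X @ (e, False) # Y))" using ch1 W by simp
  then have q1: "chain (X @ (e, False) # Y)" "dh (e, True) = dt (hd (X @ (e, False) # Y))"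
    using chain_Cons[of "(e, True)" "X @ (e, False) # Y"] by auto
  then have q2: "chain X" "chain ((e, False) # Y)" "dh (last X) = dt (hd ((e, False) # Y))"
    using chain_append[of X "(e, False) # Y"] XN by auto
  then have q3: "chain Y" "dh (e, False) = dt (hd Y)" using chain_Cons[of "(e, False)" Y] YN by auto
  have chX: "chain X" "chain Y" "dh (e, True) = dt (hd X)" "dh (last X) = dt (e, False)"
    "dh (e, False) = dt (hd Y)" using q1 q2 q3 XN by simp_all
  have lY: "dh (last Y) = dt (e, True)" using a1(2) W YN by (simp add: closedw_def)
  have ends: "dh (e, True) = hG e" "dt (e, True) = tG e" "dt (e, False) = hG e" "dh (e, False) = tG e"
    by (simp_all add: dtail_def dhead_def)
  have subs: "EC X \<subseteq> EC w - {e}" "EC Y \<subseteq> EC w - {e}"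
    using sw1 W neX by auto
  have wX: "walk (EC w - {e}) X" "walk (EC w - {e}) Y" using subs chX XN YN by (simp_all add: walk_def)
  show False
  proof (cases "EC X \<inter> EC Y = {}")
    case False
    then obtain dx dy where d: "dx \<in> set X" "dy \<in> set Y" "fst dx = fst dy" by auto
    have u1: "tG (fst dx) \<in> dt ` set X \<union> dh ` set X" using walk_vert_ends[OF d(1)] .
    have u2: "tG (fst dx) \<in> dt ` set Y \<union> dh ` set Y" using walk_vert_ends[OF d(2)] d(3) by simp
    have r1: "reach (EC w - {e}) (hG e) (tG (fst dx))"
      using reach_walk_vertices[OF wX(1) _ u1] chX(3) ends XN by auto
    have r2: "reach (EC w - {e}) (tG e) (tG (fst dx))"
      using reach_walk_vertices[OF wX(2) _ u2] chX(5) ends YN by auto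
    have "reach (EC w - {e}) (tG e) (hG e)" using r2 reach_sym[OF r1] reach_trans by blast
    then show False using br by simp
  next
    case True
    have bX: "balanced X" unfolding balanced_def
    proof
      fix g
      have cw: "count_list w1 (g, True) = count_list w1 (g, False)" using a1(4) by (simp add: balanced_def)
      show "count_list X (g, True) = count_list X (g, False)"
      proof (cases "g = e")
        case True
        then show ?thesis using nT XY(2) by simp
      next
        case ge: False
        show ?thesis
        proof (cases "g \<in> EC X")
          case True
          then have "g \<notin> EC Y" using \<open>EC X \<inter> EC Y = {}\<close> by blast
          then have "(g, True) \<notin> set Y" "(g, False) \<notin> set Y" by (metis fst_conv imageI)+
          then have "count_list Y (g, True) = 0" "count_list Y (g, False) = 0" by simp_all
          then show ?thesis using cw W ge by simp
        next
          case False
          then have "(g, True) \<notin> set X" "(g, False) \<notin> set X" by (metis fst_conv imageI)+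
          then show ?thesis by simp
        qed
      qed
    qed
    have "abelian_walk E tG hG X"
      unfolding abelian_iff
    proof (intro conjI)
      show "walk E X" using wX(1) a1(1) W by (auto simp: walk_def)
      show "closedw X" using chX(3,4) ends by (simp add: closedw_def)
      show "nb X" using a1(3) W by (simp add: nb_append nb_Cons)
      show "balanced X" by (rule bX)
    qed
    then have "length w1 \<le> length X" using m1 by (simp add: minab_def)
    then show False using W by simp
  qed
qed

end

context gr
begin

lemma walk_take:
  assumes "walk S p" "0 < i" "i < length p"
  shows "walk S (take i p)" "dt (hd (take i p)) = dt (hd p)" "dh (last (take i p)) = dt (p ! i)"
    "length (take i p) = i"
proof -
  have ch: "chain p" "p \<noteq> []" using assms(1) by (auto simp: walk_def)
  have tn: "take i p \<noteq> []" using assms by auto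
  show "walk S (take i p)" using assms(1) tn chain_take[OF ch(1)] by (auto simp: walk_def dest: in_set_takeD)
  show "dt (hd (take i p)) = dt (hd p)" using assms ch by simp
  have "last (take i p) = take i p ! (i - 1)" using tn assms by (simp add: last_conv_nth min_def)
  also have "\<dots> = p ! (i - 1)" using assms by simp
  finally show "dh (last (take i p)) = dt (p ! i)" using chain_nth[OF ch(1), of "i - 1"] assms by simp
  show "length (take i p) = i" using assms by simp
qed

lemma walk_drop:
  assumes "walk S p" "i < length p"
  shows "walk S (drop i p)" "dt (hd (drop i p)) = dt (p ! i)" "dh (last (drop i p)) = dh (last p)"
    "length (drop i p) = length p - i"
proof -
  have ch: "chain p" using assms(1) by (auto simp: walk_def)
  have dn: "drop i p \<noteq> []" using assms by auto
  show "walk S (drop i p)" using assms(1) dn chain_drop[OF ch] by (auto simp: walk_def dest: in_set_dropD)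
  show "dt (hd (drop i p)) = dt (p ! i)" using assms by (simp add: hd_drop_conv_nth)
  show "dh (last (drop i p)) = dh (last p)" using assms by simp
  show "length (drop i p) = length p - i" by simp
qed

lemma walk_cut:
  assumes "walk S p" "i < j" "j < length p" "dt (p ! i) = dt (p ! j)"
  shows "\<exists>p'. walk S p' \<and> dt (hd p') = dt (hd p) \<and> dh (last p') = dh (last p) \<and> length p' < length p"
proof (cases "i = 0")
  case True
  have "p \<noteq> []" using assms by auto
  then have "dt (hd p) = dt (p ! 0)" by (simp add: hd_conv_nth)
  then show ?thesis using walk_drop[OF assms(1,3)] assms True by (intro exI[of _ "drop j p"]) auto
next
  case False
  have ip: "0 < i" "i < length p" using False assms by auto
  note t = walk_take[OF assms(1) ip] and d = walk_drop[OF assms(1,3)]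
  have "walk S (take i p @ drop j p)" using t d False assms by (intro walk_app) auto
  moreover have "dt (hd (take i p @ drop j p)) = dt (hd p)"
  proof -
    have tn: "take i p \<noteq> []" using ip by auto
    then have "hd (take i p @ drop j p) = hd (take i p)" by simp
    then show ?thesis using t(2) by simp
  qed
  moreover have "dh (last (take i p @ drop j p)) = dh (last p)" using d assms by simp
  moreover have "length (take i p @ drop j p) < length p" using assms False by simp
  ultimately show ?thesis by blast
qed

lemma vseq_nb:
  assumes "chain p" "distinct (map dt p)" "dh (last p) \<notin> dt ` set p"
  shows "nb p"
  unfolding nb_iff_nth
proof (intro allI impI notI)
  fix i assume i: "Suc i < length p" and eq: "p ! Suc i = dinv (p ! i)"
  have h: "dh (p ! Suc i) = dt (p ! i)" using eq by simp
  show False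
  proof (cases "Suc (Suc i) < length p")
    case True
    then have "dt (p ! Suc (Suc i)) = dt (p ! i)" using chain_nth[OF assms(1) True] h by simp
    then show False using dist_nth[OF assms(2) True, of i] i by simp
  next
    case False
    then have "p ! Suc i = last p" using i by (metis Suc_lessI last_conv_nth list.size(3) not_less_zero diff_Suc_1)
    then have "dh (last p) = dt (p ! i)" using h by simp
    then show False using assms(3) i by (metis Suc_lessD image_eqI nth_mem)
  qed
qed

lemma shortest_path:
  assumes "reach S a b" "a \<noteq> b"
  shows "\<exists>p. walk S p \<and> dt (hd p) = a \<and> dh (last p) = b \<and> distinct (map dt p) \<and>
    b \<notin> dt ` set p \<and> nb p"
proof -
  define Q where "Q n \<longleftrightarrow> (\<exists>p. walk S p \<and> dt (hd p) = a \<and> dh (last p) = b \<and> length p = n)" for n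
  have "\<exists>n. Q n" using reach_walk[OF assms] by (auto simp: Q_def)
  define n where "n = (LEAST n. Q n)"
  have Qn: "Q n" unfolding n_def using \<open>\<exists>n. Q n\<close> by (rule LeastI_ex)
  have min: "\<And>p. walk S p \<Longrightarrow> dt (hd p) = a \<Longrightarrow> dh (last p) = b \<Longrightarrow> n \<le> length p"
    unfolding n_def by (rule Least_le) (auto simp: Q_def)
  obtain p where p: "walk S p" "dt (hd p) = a" "dh (last p) = b" "length p = n" using Qn by (auto simp: Q_def)
  have ch: "chain p" "p \<noteq> []" using p(1) by (auto simp: walk_def)
  have d: "distinct (map dt p)"
  proof (rule ccontr)
    assume "\<not> distinct (map dt p)"
    then obtain i j where ij: "i < j" "j < length p" "dt (p ! i) = dt (p ! j)"
      by (auto simp: distinct_conv_nth) (metis linorder_neqE_nat)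
    obtain p' where "walk S p'" "dt (hd p') = dt (hd p)" "dh (last p') = dh (last p)" "length p' < length p"
      using walk_cut[OF p(1) ij] by blast
    then show False using min p by fastforce
  qed
  have nb: "b \<notin> dt ` set p"
  proof
    assume "b \<in> dt ` set p"
    then obtain i where i: "i < length p" "dt (p ! i) = b" by (auto simp: in_set_conv_nth)
    show False
    proof (cases "i = 0")
      case True then show False using i p(2) assms(2) ch by (simp add: hd_conv_nth)
    next
      case False
      note t = walk_take[OF p(1) _ i(1)]
      then show False using False min[of "take i p"] i p by auto
    qed
  qed
  show ?thesis using p d nb vseq_nb[OF ch(1) d] p(3) by auto
qed

lemma nonbridge_cycle:
  assumes "f \<in> S" "reach (S - {f}) (hG f) (tG f)"
  shows "\<exists>C. scyc S C \<and> f \<in> EC C"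
proof -
  define d where "d = (f, True)"
  have dd: "dt d = tG f" "dh d = hG f" "fst d = f" by (simp_all add: d_def dtail_def dhead_def)
  show ?thesis
  proof (cases "tG f = hG f")
    case True
    have "scyc S [d]" using dd True assms(1) by (intro scyc_intro) (auto simp: walk_def closedw_def)
    then show ?thesis using dd by force
  next
    case False
    obtain p where p: "walk (S - {f}) p" "dt (hd p) = hG f" "dh (last p) = tG f"
      "distinct (map dt p)" "tG f \<notin> dt ` set p" "nb p"
      using shortest_path[OF assms(2)] False by metis
    have ne: "p \<noteq> []" using p(1) by (simp add: walk_def)
    have fp: "f \<notin> EC p" using p(1) by (auto simp: walk_def)
    have "scyc S (d # p)"
    proof (rule scyc_intro)
      show "walk S (d # p)" using p(1,2) dd assms(1) ne by (auto simp: walk_def chain_Cons)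
      show "closedw (d # p)" using p(3) dd ne by (simp add: closedw_def)
      have "hd p \<noteq> dinv d" using fp ne dd by (metis dinv_simps(2) hd_in_set image_eqI)
      then show "nb (d # p)" using p(6) by (simp add: nb_Cons)
      show "distinct (map dt (d # p))" using p(4,5) dd by simp
    qed
    then show ?thesis using dd by force
  qed
qed

lemma ear_from_cycle:
  assumes C: "scyc S C" and D: "scyc S D" and esc: "\<not> EC D \<subseteq> EC C" and ov: "VC C \<inter> VC D \<noteq> {}"
  shows "\<exists>Q. ear S C Q"
proof -
  obtain v where v: "v \<in> VC C" "v \<in> VC D" using ov by blast
  obtain D1 where D1: "scyc S D1" "set D1 = set D" "dt (hd D1) = v"
    using scyc_start[OF D v(2)] by blast
  note b1 = scyc_basic[OF D1(1)]
  have "\<exists>i<length D1. dt (D1 ! i) \<in> VC C \<and> fst (D1 ! i) \<notin> EC C"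
  proof (rule ccontr)
    assume "\<not> ?thesis"
    then have H: "\<And>i. i < length D1 \<Longrightarrow> dt (D1 ! i) \<in> VC C \<Longrightarrow> fst (D1 ! i) \<in> EC C" by blast
    have all: "\<forall>i<length D1. dt (D1 ! i) \<in> VC C"
    proof (intro allI impI)
      fix i assume "i < length D1"
      then show "dt (D1 ! i) \<in> VC C"
      proof (induction i)
        case 0 then show ?case using D1(3) v(1) b1(1) by (simp add: hd_conv_nth)
      next
        case (Suc i)
        then have "fst (D1 ! i) \<in> EC C" using H by simp
        then have "tG (fst (D1 ! i)) \<in> VC C" "hG (fst (D1 ! i)) \<in> VC C"
          using scyc_edge_ends[OF C] by blast+
        then have "dh (D1 ! i) \<in> VC C" using dh_end[of "D1 ! i"] by auto
        then show ?case using chain_nth[OF b1(2) Suc.prems] by simp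
      qed
    qed
    have "EC D \<subseteq> EC C"
    proof
      fix e assume "e \<in> EC D"
      then have "e \<in> EC D1" using D1(2) by simp
      then obtain d where "d \<in> set D1" "fst d = e" by blast
      then obtain i where "i < length D1" "fst (D1 ! i) = e" by (metis in_set_conv_nth)
      then show "e \<in> EC C" using H all by blast
    qed
    then show False using esc by simp
  qed
  then obtain i where i: "i < length D1" "dt (D1 ! i) \<in> VC C" "fst (D1 ! i) \<notin> EC C" by blast
  define D2 where "D2 = rot i D1"
  have D2: "scyc S D2" "hd D2 = D1 ! i" "length D2 = length D1"
    using scyc_rot[OF D1(1) i(1)] rot_simps(1)[of i D1] by (simp_all add: D2_def)
  note b2 = scyc_basic[OF D2(1)]
  define P where "P k \<longleftrightarrow> k < length D2 \<and> dh (D2 ! k) \<in> VC C" for k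
  have "P (length D2 - 1)"
  proof -
    have "D2 ! (length D2 - 1) = last D2" using b2(1) by (simp add: last_conv_nth)
    then have "dh (D2 ! (length D2 - 1)) = dt (hd D2)" using b2(4) by (simp add: closedw_def)
    then show ?thesis using D2(2) i(2) b2(1) by (simp add: P_def)
  qed
  define k where "k = (LEAST k. P k)"
  have Pk: "P k" unfolding k_def using \<open>P (length D2 - 1)\<close> by (rule LeastI)
  have nP: "\<And>m. m < k \<Longrightarrow> \<not> P m" unfolding k_def by (rule not_less_Least)
  define Q where "Q = take (Suc k) D2"
  have kl: "k < length D2" using Pk by (simp add: P_def)
  have Qn: "Q \<noteq> []" "length Q = Suc k" using kl by (cases D2, simp_all add: Q_def)+
  have wD2: "walk S D2" using D2(1) by (simp add: scyc_def)
  have "ear S C Q" unfolding ear_def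
  proof (intro conjI allI impI)
    show "scyc S C" by (rule C)
    show "walk S Q" using wD2 Qn chain_take[OF b2(2), of "Suc k"]
      by (auto simp: walk_def Q_def dest: in_set_takeD)
    show "nb Q" using nb_take[OF b2(3)] by (simp add: Q_def)
    show "distinct (map dt Q)" using D2(1) by (simp add: scyc_def Q_def take_map[symmetric])
    show "dt (hd Q) \<in> VC C" using D2(2) i(2) b2(1) by (simp add: Q_def)
    have "last Q = Q ! k" using Qn by (simp add: last_conv_nth)
    also have "\<dots> = D2 ! k" by (simp add: Q_def)
    finally have "last Q = D2 ! k" .
    then show "dh (last Q) \<in> VC C" using Pk by (simp add: P_def)
    show "fst (hd Q) \<notin> EC C" using D2(2) i(3) b2(1) by (simp add: Q_def)
  next
    fix j assume j: "0 < j \<and> j < length Q"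
    then have "j - 1 < k" "Q ! j = D2 ! j" using Qn by (auto simp: Q_def)
    moreover have "dt (D2 ! j) = dh (D2 ! (j - 1))" using chain_nth[OF b2(2), of "j - 1"] j Qn kl by simp
    ultimately show "dt (Q ! j) \<notin> VC C" using nP[of "j - 1"] kl by (simp add: P_def)
  qed
  then show ?thesis by blast
qed

end

context gr
begin

definition tri :: "'e set \<Rightarrow> 'e dedge list \<Rightarrow> 'e dedge list \<Rightarrow> 'e dedge list \<Rightarrow> bool" where
  "tri S C D P \<longleftrightarrow> scyc S C \<and> scyc S D \<and> \<not> EC D \<subseteq> EC C \<and> walk S P \<and>
     dt (hd P) \<in> VC C \<and> dh (last P) \<in> VC D"

lemma tri_min_bconf:
  assumes noear: "\<forall>C Q. \<not> ear S C Q" and t: "tri S C D P"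
    and min: "\<forall>C' D' P'. tri S C' D' P' \<longrightarrow> length P \<le> length P'"
  shows "bconf S C P D"
proof -
  have a: "scyc S C" "scyc S D" "\<not> EC D \<subseteq> EC C" "walk S P" "dt (hd P) \<in> VC C" "dh (last P) \<in> VC D"
    using t by (auto simp: tri_def)
  have disj: "VC C \<inter> VC D = {}" using ear_from_cycle[OF a(1,2,3)] noear by blast
  have ch: "chain P" "P \<noteq> []" using a(4) by (auto simp: walk_def)
  have dist: "distinct (map dt P)"
  proof (rule ccontr)
    assume "\<not> distinct (map dt P)"
    then obtain i j where ij: "i < j" "j < length P" "dt (P ! i) = dt (P ! j)"
      by (auto simp: distinct_conv_nth) (metis linorder_neqE_nat)
    obtain p' where p': "walk S p'" "dt (hd p') = dt (hd P)" "dh (last p') = dh (last P)" "length p' < length P"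
      using walk_cut[OF a(4) ij] by blast
    then have "tri S C D p'" using a by (simp add: tri_def)
    then show False using min p'(4) by fastforce
  qed
  have offD: "dt (P ! i) \<notin> VC D" if "i < length P" for i
  proof
    assume i: "dt (P ! i) \<in> VC D"
    show False
    proof (cases "i = 0")
      case True then show False using i a(5) disj ch(2) by (auto simp: hd_conv_nth)
    next
      case False
      note tk = walk_take[OF a(4) _ that]
      have "tri S C D (take i P)" using tk False a i by (simp add: tri_def)
      then show False using min tk(4) that by fastforce
    qed
  qed
  have offC: "dt (P ! i) \<notin> VC C" if "0 < i" "i < length P" for i
  proof
    assume i: "dt (P ! i) \<in> VC C"
    note dk = walk_drop[OF a(4) that(2)]
    have "tri S C D (drop i P)" using dk a i by (simp add: tri_def)
    then show False using min dk(4) that by fastforce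
  qed
  have "dh (last P) \<notin> dt ` set P"
  proof
    assume "dh (last P) \<in> dt ` set P"
    then obtain i where "i < length P" "dt (P ! i) = dh (last P)" by (auto simp: in_set_conv_nth)
    then show False using offD a(6) by metis
  qed
  then have nbP: "nb P" using vseq_nb[OF ch(1) dist] by simp
  show ?thesis unfolding bconf_def using a disj nbP dist offC offD by blast
qed

lemma tri_bridges:
  assumes noear: "\<forall>C Q. \<not> ear S C Q" and t: "tri S C D P"
    and min: "\<forall>C' D' P'. tri S C' D' P' \<longrightarrow> length P \<le> length P'" and f: "f \<in> EC P"
  shows "\<not> reach (S - {f}) (tG f) (hG f)"
proof
  assume r: "reach (S - {f}) (tG f) (hG f)"
  have a: "scyc S C" "walk S P" "dt (hd P) \<in> VC C"
    using t by (auto simp: tri_def)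
  have B: "bconf S C P D" using tri_min_bconf[OF noear t min] .
  have fS: "f \<in> S" using a(2) f by (auto simp: walk_def)
  obtain C3 where C3: "scyc S C3" "f \<in> EC C3" using nonbridge_cycle[OF fS reach_sym[OF r]] by blast
  have "f \<notin> EC C" using bconf_basic(4)[OF B] f by blast
  then have esc: "\<not> EC C3 \<subseteq> EC C" using C3(2) by blast
  obtain j where j: "j < length P" "fst (P ! j) = f" using f by (auto simp: in_set_conv_nth)
  have "tG f \<in> VC C3" "hG f \<in> VC C3" using scyc_edge_ends[OF C3(1) C3(2)] by auto
  then have dj: "dt (P ! j) \<in> VC C3" using dt_end[of "P ! j"] j(2) by auto
  show False
  proof (cases "j = 0")
    case True
    have "P \<noteq> []" using j by auto
    then have "dt (hd P) \<in> VC C3" using dj True by (simp add: hd_conv_nth)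
    then have "VC C \<inter> VC C3 \<noteq> {}" using a(3) by blast
    then show False using ear_from_cycle[OF a(1) C3(1) esc] noear by blast
  next
    case False
    note tk = walk_take[OF a(2) _ j(1)]
    have "tri S C C3 (take j P)" using tk False a C3(1) esc dj by (simp add: tri_def)
    then show False using min tk(4) j False by fastforce
  qed
qed

lemma walk_vert_ends2:
  "d \<in> set X \<Longrightarrow> hG (fst d) \<in> dt ` set X \<union> dh ` set X"
proof -
  assume d: "d \<in> set X"
  have "hG (fst d) \<in> {dt d, dh d}" using ends_d[of d] by blast
  then show ?thesis using d by blast
qed

lemma lAbl_le:
  assumes fin: "finite E0" and sub: "E0 \<subseteq> EC w"
    and wt: "\<And>e. e \<in> E0 \<Longrightarrow> (if e \<in> bar_edges V0 E0 tG hG then 4 else 2) \<le> cnt w e"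
  shows "l_Abl V0 E0 tG hG \<le> length w"
proof -
  have "l_Abl V0 E0 tG hG \<le> (\<Sum>e\<in>E0. cnt w e)" unfolding l_Abl_def using wt by (intro sum_mono) auto
  also have "\<dots> \<le> (\<Sum>e\<in>EC w. cnt w e)" using sub by (intro sum_mono2) auto
  also have "\<dots> = length w" using length_cnt[of "EC w" w] by simp
  finally show ?thesis .
qed

lemma ear_cel:
  assumes "ear H C Q" "H \<subseteq> E" "\<forall>e\<in>E. tG e \<in> V \<and> hG e \<in> V"
  shows "(eV C Q, eE C Q) \<in> cel_subgraphs V E tG hG"
proof -
  note ep = ear_props[OF assms(1)]
  have sC: "scyc H C" using assms(1) by (simp add: ear_def)
  have "eV C Q \<subseteq> V"
  proof -
    have "EC C \<subseteq> E" "EC Q \<subseteq> E" using scyc_basic(6)[OF sC] ear_basic(5)[OF assms(1)] assms(2) by auto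
    then show ?thesis using dt_in[of _ E V] assms(3) by (auto simp: eV_def VC_def)
  qed
  moreover have "int (card (eV C Q)) - int (card (eE C Q)) = -1"
  proof -
    have "card (eV C Q) + 1 = card (eE C Q)" using ep(4,5,10) by (cases Q) auto
    then show ?thesis by linarith
  qed
  ultimately show ?thesis using ep assms(2) by (intro cel_intro) auto
qed

lemma bconf_cel:
  assumes "bconf H C P D" "H \<subseteq> E" "\<forall>e\<in>E. tG e \<in> V \<and> hG e \<in> V"
  shows "(bV C P D, bE C P D) \<in> cel_subgraphs V E tG hG"
proof -
  note bp = bconf_props[OF assms(1)]
  have s: "scyc H C" "scyc H D" using assms(1) by (auto simp: bconf_def)
  have "bV C P D \<subseteq> V"
  proof -
    have "EC C \<subseteq> E" "EC D \<subseteq> E" "EC P \<subseteq> E"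
      using scyc_basic(6)[OF s(1)] scyc_basic(6)[OF s(2)] bconf_basic(7)[OF assms(1)] assms(2) by auto
    then show ?thesis using dt_in[of _ E V] assms(3) by (auto simp: bV_def VC_def)
  qed
  moreover have "int (card (bV C P D)) - int (card (bE C P D)) = -1"
  proof -
    have "card (bV C P D) + 1 = card (bE C P D)" using bp(4,5) bconf_basic(1)[OF assms(1)] by (cases P) auto
    then show ?thesis by linarith
  qed
  ultimately show ?thesis using bp assms(2) by (intro cel_intro) auto
qed

end

context gr
begin

lemma decomp_facts:
  assumes "barbell_decomp V0 E0 tG hG w1 w2 b"
  shows "b \<noteq> []" "walk_edges b \<subseteq> E0"
  using assms is_path_props[of E0 b] by (auto simp: barbell_decomp_def walk_def walk_edges_def)

lemma minab_cel:
  assumes m: "minab E w" and VE: "\<forall>e\<in>E. tG e \<in> V \<and> hG e \<in> V"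
  shows "\<exists>G'\<in>cel_subgraphs V E tG hG. l_Abl (fst G') (snd G') tG hG \<le> length w"
proof -
  have a: "walk E w" "closedw w" "nb w" "balanced w" using m by (auto simp: minab_def abelian_iff)
  define H where "H = EC w"
  have ne: "w \<noteq> []" and chw: "chain w" using a(1) by (auto simp: walk_def)
  have fH: "finite H" by (simp add: H_def)
  have HE: "H \<subseteq> E" using a(1) by (auto simp: walk_def H_def)
  have Hne: "H \<noteq> {}" using ne by (simp add: H_def)
  have sc: "succp H" using minab_succp[OF m] by (simp add: H_def)
  obtain C where C: "scyc H C" using cyc_exists[OF fH sc Hne] by blast
  define VH where "VH = dt ` set w \<union> dh ` set w"
  have wH: "walk H w" using a(1) by (simp add: walk_def H_def)
  have endsH: "\<forall>e\<in>H. tG e \<in> VH \<and> hG e \<in> VH"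
    using walk_vert_ends walk_vert_ends2 by (auto simp: H_def VH_def)
  have conH: "connected_graph VH H tG hG"
  proof (rule connected_from_root[of "dt (hd w)"])
    show "dt (hd w) \<in> VH" using ne by (simp add: VH_def)
    fix x assume "x \<in> VH"
    then show "reach H (dt (hd w)) x" using reach_walk_vertices[OF wH] ne by (auto simp: VH_def)
  qed
  have "\<exists>e. e \<in> H \<and> e \<notin> EC C"
  proof (rule ccontr)
    assume "\<not> ?thesis"
    then have "EC w \<subseteq> EC C" by (auto simp: H_def)
    then show False using single_cycle_unbal[OF C chw a(3) ne] a(4) by blast
  qed
  then obtain e where e: "e \<in> H" "e \<notin> EC C" by blast
  obtain d0 where d0: "fst d0 \<in> H" "fst d0 \<notin> EC C" "dt d0 \<in> VC C"
    using find_d0[OF C e conH endsH] by blast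
  have cnt2: "\<And>e. e \<in> H \<Longrightarrow> 2 \<le> cnt w e" using cnt_ge2[OF a(4)] by (simp add: H_def)
  show ?thesis
  proof (cases "\<exists>C' Q. ear H C' Q")
    case True
    then obtain C' Q where Q: "ear H C' Q" by blast
    note ep = ear_props[OF Q]
    have cel: "(eV C' Q, eE C' Q) \<in> cel_subgraphs V E tG hG" using ear_cel[OF Q HE VE] .
    have nbar: "\<not> is_barbell (eV C' Q) (eE C' Q) tG hG"
    proof
      assume "is_barbell (eV C' Q) (eE C' Q) tG hG"
      then obtain w1 w2 b where dec: "barbell_decomp (eV C' Q) (eE C' Q) tG hG w1 w2 b"
        by (auto simp: is_barbell_def)
      note df = decomp_facts[OF dec]
      have f: "fst (hd b) \<in> walk_edges b" using df(1) by (simp add: walk_edges_def)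
      have chi: "int (card (eV C' Q)) - int (card (eE C' Q)) = -1"
      proof -
        have "card (eV C' Q) + 1 = card (eE C' Q)" using ep(4,5,10) by (cases Q) auto
        then show ?thesis by linarith
      qed
      have "\<not> reach (eE C' Q - {fst (hd b)}) (tG (fst (hd b))) (hG (fst (hd b)))"
        using bar_bridge[OF ep(1,2) chi dec f] .
      moreover have "fst (hd b) \<in> eE C' Q" using f df(2) by blast
      ultimately show False using ep(9) by blast
    qed
    have "l_Abl (eV C' Q) (eE C' Q) tG hG \<le> length w"
    proof (rule lAbl_le[OF ep(2)])
      show "eE C' Q \<subseteq> EC w" using ep(3) by (simp add: H_def)
      fix e assume "e \<in> eE C' Q"
      then have "2 \<le> cnt w e" using cnt2 ep(3) by blast
      then show "(if e \<in> bar_edges (eV C' Q) (eE C' Q) tG hG then 4 else 2) \<le> cnt w e"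
        using nbar by (simp add: bar_edges_def)
    qed
    then show ?thesis using cel by force
  next
    case False
    then have noear: "\<forall>C Q. \<not> ear H C Q" by blast
    obtain P D where B0: "bconf H C P D" using grow_cycle[OF fH sc C d0] noear by blast
    have "tri H C D P"
    proof -
      have "D \<noteq> []" using B0 by (auto simp: bconf_def scyc_def walk_def)
      then have "fst (hd D) \<in> EC D" by simp
      then have "\<not> EC D \<subseteq> EC C" using bconf_basic(6)[OF B0] by blast
      then show ?thesis using B0 by (simp add: tri_def bconf_def)
    qed
    define T where "T n \<longleftrightarrow> (\<exists>C D P. tri H C D P \<and> length P = n)" for n
    have "\<exists>n. T n" using \<open>tri H C D P\<close> by (auto simp: T_def)
    define n where "n = (LEAST n. T n)"
    have Tn: "T n" unfolding n_def using \<open>\<exists>n. T n\<close> by (rule LeastI_ex)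
    obtain C1 D1 P1 where t1: "tri H C1 D1 P1" "length P1 = n" using Tn by (auto simp: T_def)
    have min: "\<forall>C' D' P'. tri H C' D' P' \<longrightarrow> length P1 \<le> length P'"
      using t1(2) by (auto simp: n_def T_def intro: Least_le)
    have B: "bconf H C1 P1 D1" using tri_min_bconf[OF noear t1(1) min] .
    note bp = bconf_props[OF B]
    have cel: "(bV C1 P1 D1, bE C1 P1 D1) \<in> cel_subgraphs V E tG hG" using bconf_cel[OF B HE VE] .
    have chi: "int (card (bV C1 P1 D1)) - int (card (bE C1 P1 D1)) = -1"
    proof -
      have "card (bV C1 P1 D1) + 1 = card (bE C1 P1 D1)" using bp(4,5) bconf_basic(1)[OF B] by (cases P1) auto
      then show ?thesis by linarith
    qed
    have barP: "bar_edges (bV C1 P1 D1) (bE C1 P1 D1) tG hG \<subseteq> EC P1"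
    proof
      fix f assume f: "f \<in> bar_edges (bV C1 P1 D1) (bE C1 P1 D1) tG hG"
      then have isb: "is_barbell (bV C1 P1 D1) (bE C1 P1 D1) tG hG" by (auto simp: bar_edges_def split: if_splits)
      define b0 where "b0 = (SOME b. \<exists>w1 w2. barbell_decomp (bV C1 P1 D1) (bE C1 P1 D1) tG hG w1 w2 b)"
      have "\<exists>b w1 w2. barbell_decomp (bV C1 P1 D1) (bE C1 P1 D1) tG hG w1 w2 b"
        using isb by (auto simp: is_barbell_def)
      then have "\<exists>w1 w2. barbell_decomp (bV C1 P1 D1) (bE C1 P1 D1) tG hG w1 w2 b0"
        unfolding b0_def by (metis (mono_tags, lifting) someI_ex)
      then obtain w1 w2 where dec: "barbell_decomp (bV C1 P1 D1) (bE C1 P1 D1) tG hG w1 w2 b0" by blast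
      have fb: "f \<in> walk_edges b0" using f isb by (simp add: bar_edges_def b0_def)
      have nr: "\<not> reach (bE C1 P1 D1 - {f}) (tG f) (hG f)" using bar_bridge[OF bp(1,2) chi dec fb] .
      have "f \<in> bE C1 P1 D1" using fb decomp_facts(2)[OF dec] by blast
      moreover have "f \<notin> EC C1 \<union> EC D1" using nr bp(9) by blast
      ultimately show "f \<in> EC P1" by (auto simp: bE_def)
    qed
    have "l_Abl (bV C1 P1 D1) (bE C1 P1 D1) tG hG \<le> length w"
    proof (rule lAbl_le[OF bp(2)])
      show "bE C1 P1 D1 \<subseteq> EC w" using bp(3) by (simp add: H_def)
      fix e assume e: "e \<in> bE C1 P1 D1"
      show "(if e \<in> bar_edges (bV C1 P1 D1) (bE C1 P1 D1) tG hG then 4 else 2) \<le> cnt w e"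
      proof (cases "e \<in> bar_edges (bV C1 P1 D1) (bE C1 P1 D1) tG hG")
        case True
        then have eP: "e \<in> EC P1" using barP by blast
        have "\<not> reach (H - {e}) (tG e) (hG e)" using tri_bridges[OF noear t1(1) min eP] .
        moreover have "e \<in> EC w" using e bp(3) by (auto simp: H_def)
        ultimately have "4 \<le> cnt w e" using bridge_cnt[OF m, of e] by (simp add: H_def)
        then show ?thesis using True by simp
      next
        case False
        then show ?thesis using cnt2 e bp(3) by auto
      qed
    qed
    then show ?thesis using cel by force
  qed
qed

end

theorem lemma2p5:
  fixes V :: "'v set" and E :: "'e set" and tG hG :: "'e \<Rightarrow> 'v"
  assumes "\<forall>e\<in>E. tG e \<in> V \<and> hG e \<in> V"
  shows "Abl E tG hG = (INF G'\<in>cel_subgraphs V E tG hG. enat (l_Abl (fst G') (snd G') tG hG))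
    \<and> (cel_subgraphs V E tG hG = {} \<longrightarrow>
         Abl E tG hG = \<infinity> \<and> \<not> (\<exists>w. abelian_walk E tG hG w))"
proof -
  interpret gr tG hG .
  let ?I = "(INF G'\<in>cel_subgraphs V E tG hG. enat (l_Abl (fst G') (snd G') tG hG))"
  have minex: "\<exists>w0. minab E w0" if "abelian_walk E tG hG w" for w
  proof -
    define Q where "Q n \<longleftrightarrow> (\<exists>w. abelian_walk E tG hG w \<and> length w = n)" for n
    have "Q (length w)" using that by (auto simp: Q_def)
    define n where "n = (LEAST n. Q n)"
    have "Q n" unfolding n_def using \<open>Q (length w)\<close> by (rule LeastI)
    then obtain w0 where w0: "abelian_walk E tG hG w0" "length w0 = n" by (auto simp: Q_def)
    have "\<forall>w'. abelian_walk E tG hG w' \<longrightarrow> length w0 \<le> length w'"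
      using w0(2) by (auto simp: n_def Q_def intro: Least_le)
    then show ?thesis using w0(1) by (auto simp: minab_def)
  qed
  have ablmin: "Abl E tG hG = enat (length w0)" if "minab E w0" for w0
  proof (rule antisym)
    show "Abl E tG hG \<le> enat (length w0)" using that Abl_le by (simp add: minab_def)
    show "enat (length w0) \<le> Abl E tG hG" unfolding Abl_def
      using that by (intro Inf_greatest) (auto simp: minab_def)
  qed
  have le1: "Abl E tG hG \<le> ?I"
  proof (rule INF_greatest)
    fix G' assume "G' \<in> cel_subgraphs V E tG hG"
    then show "Abl E tG hG \<le> enat (l_Abl (fst G') (snd G') tG hG)"
      using partA[of "fst G'" "snd G'"] by simp
  qed
  have le2: "?I \<le> Abl E tG hG"
  proof (cases "\<exists>w. abelian_walk E tG hG w")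
    case True
    then obtain w0 where m: "minab E w0" using minex by blast
    obtain G' where G': "G' \<in> cel_subgraphs V E tG hG" "l_Abl (fst G') (snd G') tG hG \<le> length w0"
      using minab_cel[OF m assms] by blast
    have "?I \<le> enat (l_Abl (fst G') (snd G') tG hG)" using G'(1) by (rule INF_lower)
    also have "\<dots> \<le> enat (length w0)" using G'(2) by simp
    also have "\<dots> = Abl E tG hG" using ablmin[OF m] by simp
    finally show ?thesis .
  next
    case False
    then have "Abl E tG hG = \<infinity>" by (simp add: Abl_def top_enat_def)
    then show ?thesis by simp
  qed
  have eq: "Abl E tG hG = ?I" using le1 le2 by (rule antisym)
  moreover have "cel_subgraphs V E tG hG = {} \<longrightarrow> Abl E tG hG = \<infinity> \<and> \<not> (\<exists>w. abelian_walk E tG hG w)"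
  proof
    assume em: "cel_subgraphs V E tG hG = {}"
    then have "Abl E tG hG = \<infinity>" using eq by (simp add: top_enat_def)
    moreover have "\<not> (\<exists>w. abelian_walk E tG hG w)"
    proof
      assume "\<exists>w. abelian_walk E tG hG w"
      then obtain w0 where m: "minab E w0" using minex by blast
      then show False using minab_cel[OF m assms] em by blast
    qed
    ultimately show "Abl E tG hG = \<infinity> \<and> \<not> (\<exists>w. abelian_walk E tG hG w)" by simp
  qed
  ultimately show ?thesis by blast
qed

end
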